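(* Let $g$ be an absolutely continuous distortion function whose weight $\gamma$ satisfies $\int_0^1\gamma^2<\infty$. Assume $\inf\{\lambda\ge0:k^\uparrow_\lambda\text{ not constant}\}=0$, and let $\lambda>0$. Then the problem $$\sup_{h\in\mathcal M^{-1}(\mu,\sigma)}\int_0^1\big(\gamma(u)+\lambda F^{-1}(u)\big)h(u)\,du$$ has the unique solution $$h^\uparrow_\lambda(u)=\mu+\sigma\,\frac{k^\uparrow_\lambda(u)-a_\lambda}{b_\lambda},$$ where $a_\lambda=\mathbb E(k^\uparrow_\lambda(U))$ and $b_\lambda=\operatorname{std}(k^\uparrow_\lambda(U))>0$. Moreover, $\lambda\mapsto\operatorname{corr}(F^{-1}(U),h^\uparrow_\lambda(U))$ is continuous on $(0,\infty)$.
   Context: $U\sim\mathcal U(0,1)$. A distortion function is a non-decreasing $g:[0,1]\to[0,1]$ with $g(0)=0$, $g(1)=1$; its weight is $\gamma(u)=\partial_-g(x)|_{x=1-u}$. $F$ is a distribution function with finite second moment and quantile function $F^{-1}(u)=\inf\{y:F(y)\ge u\}$. $\mathcal M^{-1}(\mu,\sigma)$ is the set of quantile functions of distributions on $\mathbb R$ with mean $\mu\in\mathbb R$ and variance $\sigma^2>0$. $\mathcal K$ is the set of square-integrable, non-decreasing, left-continuous functions $(0,1)\to\mathbb R$, and $$k^\uparrow_\lambda=\arg\min_{k\in\mathcal K}\|\gamma+\lambda F^{-1}-k\|^2_{L^2(0,1)}.$$ *)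

theory Defs
  imports "HOL-Probability.Probability"
begin

definition distortion :: "(real \<Rightarrow> real) \<Rightarrow> bool" where
  "distortion g \<longleftrightarrow> mono_on {0..1} g \<and> g ` {0..1} \<subseteq> {0..1} \<and> g 0 = 0 \<and> g 1 = 1"

definition abs_cont_01 :: "(real \<Rightarrow> real) \<Rightarrow> bool" where
  "abs_cont_01 g \<longleftrightarrow> (\<forall>e>0. \<exists>d>0. \<forall>(n::nat) (a::nat \<Rightarrow> real) b.
     (\<forall>i<n. 0 \<le> a i \<and> a i \<le> b i \<and> b i \<le> 1) \<and>
     (\<forall>i<n. \<forall>j<n. i \<noteq> j \<longrightarrow> b i \<le> a j \<or> b j \<le> a i) \<and>
     (\<Sum>i<n. b i - a i) < d \<longrightarrow> (\<Sum>i<n. \<bar>g (b i) - g (a i)\<bar>) < e)"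

definition left_deriv :: "(real \<Rightarrow> real) \<Rightarrow> real \<Rightarrow> real" where
  "left_deriv g x = Lim (at_left x) (\<lambda>y. (g x - g y) / (x - y))"

definition weight :: "(real \<Rightarrow> real) \<Rightarrow> real \<Rightarrow> real" where
  "weight g u = left_deriv g (1 - u)"

definition quantile :: "(real \<Rightarrow> real) \<Rightarrow> real \<Rightarrow> real" where
  "quantile F u = Inf {y. F y \<ge> u}"

definition sq_int01 :: "(real \<Rightarrow> real) \<Rightarrow> bool" where
  "sq_int01 f \<longleftrightarrow> f \<in> borel_measurable lborel \<and> set_integrable lborel {0<..<1} (\<lambda>u. (f u)\<^sup>2)"

definition Mq :: "real \<Rightarrow> real \<Rightarrow> (real \<Rightarrow> real) set" where
  "Mq \<mu> \<sigma> = {h. \<exists>N. real_distribution N \<and> integrable N (\<lambda>x. x\<^sup>2) \<and>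
      prob_space.expectation N (\<lambda>x. x) = \<mu> \<and> prob_space.variance N (\<lambda>x. x) = \<sigma>\<^sup>2 \<and>
      (\<forall>u\<in>{0<..<1}. h u = quantile (cdf N) u)}"

definition Kcone :: "(real \<Rightarrow> real) set" where
  "Kcone = {k. sq_int01 k \<and> mono_on {0<..<1} k \<and> (\<forall>u\<in>{0<..<1}. continuous (at_left u) k)}"

definition L2dist2 :: "(real \<Rightarrow> real) \<Rightarrow> (real \<Rightarrow> real) \<Rightarrow> real" where
  "L2dist2 f k = (LINT u:{0<..<1}|lborel. (f u - k u)\<^sup>2)"

definition kup :: "(real \<Rightarrow> real) \<Rightarrow> (real \<Rightarrow> real) \<Rightarrow> real \<Rightarrow> real \<Rightarrow> real" where
  "kup \<gamma> Q lam = (SOME k. k \<in> Kcone \<and> (\<forall>u. u \<notin> {0<..<1} \<longrightarrow> k u = 0) \<and>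
       (\<forall>k'\<in>Kcone. L2dist2 (\<lambda>u. \<gamma> u + lam * Q u) k \<le> L2dist2 (\<lambda>u. \<gamma> u + lam * Q u) k'))"

(* E f(U), std f(U), corr(f(U), h(U)) for U uniform on (0,1) *)
definition EU :: "(real \<Rightarrow> real) \<Rightarrow> real" where
  "EU f = (LINT u:{0<..<1}|lborel. f u)"

definition stdU :: "(real \<Rightarrow> real) \<Rightarrow> real" where
  "stdU f = sqrt (LINT u:{0<..<1}|lborel. (f u - EU f)\<^sup>2)"

definition corrU :: "(real \<Rightarrow> real) \<Rightarrow> (real \<Rightarrow> real) \<Rightarrow> real" where
  "corrU f h = (EU (\<lambda>u. f u * h u) - EU f * EU h) / (stdU f * stdU h)"

definition obj :: "(real \<Rightarrow> real) \<Rightarrow> (real \<Rightarrow> real) \<Rightarrow> real" where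
  "obj w h = (LINT u:{0<..<1}|lborel. w u * h u)"

end

theory Submission
  imports Defs
begin

definition U01 :: "real measure" where "U01 = restrict_space lborel {0<..<1}"

lemma space_U01[simp]: "space U01 = {0<..<1}"
  by (simp add: U01_def space_restrict_space)

lemma sets_U01: "sets U01 = sets (restrict_space borel {0<..<1::real})"
  unfolding U01_def by (simp add: sets_restrict_space)

lemma prob_U01: "prob_space U01"
  unfolding U01_def
  by (auto simp add: emeasure_restrict_space space_restrict_space intro!: prob_spaceI)

interpretation U: prob_space U01 by (rule prob_U01)

lemma LINT_U01: fixes f :: "real \<Rightarrow> real" shows "(LINT u:{0<..<1}|lborel. f u) = integral\<^sup>L U01 f"
  unfolding U01_def set_lebesgue_integral_def
  by (rule integral_restrict_space[symmetric]) auto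

lemma set_integrable_U01: fixes f :: "real \<Rightarrow> real" shows "set_integrable lborel {0<..<1} f = integrable U01 f"
  unfolding U01_def by (rule set_integrable_eq) auto

lemma meas_U01_iff: fixes f :: "real \<Rightarrow> real" shows "f \<in> borel_measurable U01 \<longleftrightarrow> (\<lambda>x. indicator {0<..<1} x *\<^sub>R f x) \<in> borel_measurable lborel"
  unfolding U01_def by (rule borel_measurable_restrict_space_iff) auto

lemma meas_U01_lborel: "f \<in> borel_measurable lborel \<Longrightarrow> f \<in> borel_measurable U01"
  unfolding U01_def by (rule measurable_restrict_space1)

definition L2 :: "(real \<Rightarrow> real) \<Rightarrow> bool" where
  "L2 f \<longleftrightarrow> f \<in> borel_measurable U01 \<and> integrable U01 (\<lambda>u. (f u)\<^sup>2)"

definition ip :: "(real \<Rightarrow> real) \<Rightarrow> (real \<Rightarrow> real) \<Rightarrow> real" where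
  "ip f g = integral\<^sup>L U01 (\<lambda>u. f u * g u)"

lemma L2_meas: "L2 f \<Longrightarrow> f \<in> borel_measurable U01" by (simp add: L2_def)
lemma L2_sq: "L2 f \<Longrightarrow> integrable U01 (\<lambda>u. (f u)\<^sup>2)" by (simp add: L2_def)

lemma L2_prod_int: assumes "L2 f" "L2 g" shows "integrable U01 (\<lambda>u. f u * g u)"
proof (rule Bochner_Integration.integrable_bound)
  show "integrable U01 (\<lambda>u. (f u)\<^sup>2 + (g u)\<^sup>2)" using assms by (simp add: L2_def)
  show "(\<lambda>u. f u * g u) \<in> borel_measurable U01" using assms by (auto intro!: borel_measurable_times simp: L2_def)
  show "AE x in U01. norm (f x * g x) \<le> norm ((f x)\<^sup>2 + (g x)\<^sup>2)"
  proof (rule AE_I2)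
    fix x
    have "2 * \<bar>f x\<bar> * \<bar>g x\<bar> \<le> \<bar>f x\<bar>\<^sup>2 + \<bar>g x\<bar>\<^sup>2"
      by (rule sum_squares_bound)
    then have "2 * (\<bar>f x\<bar> * \<bar>g x\<bar>) \<le> (f x)\<^sup>2 + (g x)\<^sup>2"
      by (simp add: mult.assoc)
    moreover have "0 \<le> \<bar>f x\<bar> * \<bar>g x\<bar>" by simp
    ultimately have "\<bar>f x\<bar> * \<bar>g x\<bar> \<le> (f x)\<^sup>2 + (g x)\<^sup>2" by linarith
    then show "norm (f x * g x) \<le> norm ((f x)\<^sup>2 + (g x)\<^sup>2)"
      by (simp add: abs_mult)
  qed
qed

lemma L2_const[simp]: "L2 (\<lambda>u. c)"
  unfolding L2_def by auto

lemma L2_int: assumes "L2 f" shows "integrable U01 f"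
  using L2_prod_int[OF assms L2_const[of 1]] by simp

lemma L2_add: assumes "L2 f" "L2 g" shows "L2 (\<lambda>u. f u + g u)"
  unfolding L2_def power2_sum using assms L2_prod_int[OF assms]
  by (auto simp: L2_def mult.assoc intro!: Bochner_Integration.integrable_add integrable_mult_right borel_measurable_add)

lemma L2_scale: assumes "L2 f" shows "L2 (\<lambda>u. c * f u)"
  using assms unfolding L2_def by (auto simp: power_mult_distrib)

lemma L2_uminus: assumes "L2 f" shows "L2 (\<lambda>u. - f u)"
  using L2_scale[OF assms, of "-1"] by simp

lemma L2_diff: assumes "L2 f" "L2 g" shows "L2 (\<lambda>u. f u - g u)"
  using L2_add[OF assms(1) L2_uminus[OF assms(2)]] by simp

lemma L2_cong: assumes "L2 f" "\<And>u. u \<in> {0<..<1} \<Longrightarrow> f u = g u" shows "L2 g"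
proof -
  have "g \<in> borel_measurable U01"
    using assms by (metis L2_meas measurable_cong space_U01)
  moreover have "integrable U01 (\<lambda>u. (g u)\<^sup>2) = integrable U01 (\<lambda>u. (f u)\<^sup>2)"
    by (rule Bochner_Integration.integrable_cong) (auto simp: assms(2))
  ultimately show ?thesis using L2_sq[OF assms(1)] by (simp add: L2_def)
qed

lemma ip_cong: assumes "\<And>u. u \<in> {0<..<1} \<Longrightarrow> f u = f' u" "\<And>u. u \<in> {0<..<1} \<Longrightarrow> g u = g' u"
  shows "ip f g = ip f' g'"
  unfolding ip_def using assms by (intro Bochner_Integration.integral_cong) auto

lemma ip_comm: "ip f g = ip g f" unfolding ip_def by (simp add: mult.commute)

lemma ip_add_left: assumes "L2 f" "L2 g" "L2 h"
  shows "ip (\<lambda>u. f u + g u) h = ip f h + ip g h"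
  unfolding ip_def distrib_right
  by (rule Bochner_Integration.integral_add) (auto intro: L2_prod_int assms)

lemma ip_diff_left: assumes "L2 f" "L2 g" "L2 h"
  shows "ip (\<lambda>u. f u - g u) h = ip f h - ip g h"
  unfolding ip_def left_diff_distrib
  by (rule Bochner_Integration.integral_diff) (auto intro: L2_prod_int assms)

lemma ip_scale_left: "ip (\<lambda>u. c * f u) h = c * ip f h"
  unfolding ip_def by (simp add: mult.assoc)

lemma ip_add_right: assumes "L2 f" "L2 g" "L2 h"
  shows "ip h (\<lambda>u. f u + g u) = ip h f + ip h g"
  using ip_add_left[OF assms] by (simp add: ip_comm)

lemma ip_diff_right: assumes "L2 f" "L2 g" "L2 h"
  shows "ip h (\<lambda>u. f u - g u) = ip h f - ip h g"
  using ip_diff_left[OF assms] by (simp add: ip_comm)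

lemma ip_scale_right: "ip h (\<lambda>u. c * f u) = c * ip h f"
  using ip_scale_left by (simp add: ip_comm)

lemma ip_const_right: "ip f (\<lambda>u. c) = c * integral\<^sup>L U01 f"
  unfolding ip_def by simp

lemma ip_const_left: "ip (\<lambda>u. c) f = c * integral\<^sup>L U01 f"
  unfolding ip_def by simp

lemma ip_self_nonneg: "0 \<le> ip f f"
  unfolding ip_def by (rule Bochner_Integration.integral_nonneg) simp

lemma ip_self_sq: "ip f f = integral\<^sup>L U01 (\<lambda>u. (f u)\<^sup>2)"
  unfolding ip_def by (simp add: power2_eq_square)

lemma ip_self_zero_AE: assumes "L2 f" "ip f f = 0" shows "AE u in U01. f u = 0"
proof -
  have "AE u in U01. (f u)\<^sup>2 = 0"
    using assms Bochner_Integration.integral_nonneg_eq_0_iff_AE[OF L2_sq[OF assms(1)]]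
    by (simp add: ip_self_sq)
  then show ?thesis by simp
qed

lemma quad_lemma:
  fixes A B C :: real
  assumes "\<And>t. 0 \<le> A - 2 * t * B + t\<^sup>2 * C"
  shows "B\<^sup>2 \<le> A * C"
proof (cases "C = 0")
  case True
  have "B = 0"
  proof (rule ccontr)
    assume "B \<noteq> 0"
    have "0 \<le> A - 2 * ((A + 1) / (2 * B)) * B" using assms[of "(A + 1) / (2 * B)"] True by simp
    also have "\<dots> = -1" using \<open>B \<noteq> 0\<close> by (simp add: field_simps)
    finally show False by simp
  qed
  then show ?thesis using True by simp
next
  case False
  have C: "C > 0"
  proof -
    have "0 \<le> A - 2 * t * B + t\<^sup>2 * C" for t using assms .
    show ?thesis
    proof (rule ccontr)
      assume "\<not> C > 0" then have "C < 0" using False by simp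
      define t where "t = (\<bar>A\<bar> + 1) / (- C) + 1"
      have t1: "t \<ge> 1" unfolding t_def using \<open>C<0\<close> by (simp add: field_simps)
      have t2: "t * (- C) \<ge> \<bar>A\<bar> + 1" unfolding t_def using \<open>C<0\<close> by (simp add: field_simps)
      have "t\<^sup>2 * (- C) = t * (t * (- C))" by (simp add: power2_eq_square)
      also have "\<dots> \<ge> 1 * (\<bar>A\<bar> + 1)" using t1 t2
        by (intro mult_mono) auto
      finally have t3: "t\<^sup>2 * C \<le> - \<bar>A\<bar> - 1" by simp
      have "0 \<le> A - 2 * t * B + t\<^sup>2 * C" "0 \<le> A - 2 * (-t) * B + (-t)\<^sup>2 * C"
        using assms by blast+
      then show False using t3 by simp
    qed
  qed
  have "0 \<le> A - 2 * (B / C) * B + (B / C)\<^sup>2 * C" using assms by blast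
  also have "\<dots> = A - B\<^sup>2 / C" using C by (simp add: field_simps power2_eq_square)
  finally show ?thesis using C by (simp add: field_simps)
qed

lemma ip_CS: assumes "L2 f" "L2 g" shows "(ip f g)\<^sup>2 \<le> ip f f * ip g g"
proof -
  have "0 \<le> ip f f - 2 * t * ip f g + t\<^sup>2 * ip g g" for t
  proof -
    have Lt: "L2 (\<lambda>u. t * g u)" by (rule L2_scale[OF assms(2)])
    have "0 \<le> ip (\<lambda>u. f u - t * g u) (\<lambda>u. f u - t * g u)" by (rule ip_self_nonneg)
    also have "\<dots> = ip f f - 2 * t * ip f g + t\<^sup>2 * ip g g"
      using assms Lt
      by (simp add: ip_diff_left ip_diff_right L2_diff ip_scale_left ip_scale_right ip_comm[of g f]
          power2_eq_square algebra_simps)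
    finally show ?thesis .
  qed
  then show ?thesis by (rule quad_lemma)
qed

lemma ip_CS_abs: assumes "L2 f" "L2 g" shows "\<bar>ip f g\<bar> \<le> sqrt (ip f f) * sqrt (ip g g)"
  using ip_CS[OF assms] ip_self_nonneg[of f] ip_self_nonneg[of g]
  by (metis real_sqrt_abs real_sqrt_le_mono real_sqrt_mult)

definition Kc :: "(real \<Rightarrow> real) \<Rightarrow> bool" where
  "Kc f \<longleftrightarrow> L2 f \<and> mono_on {0<..<1} f \<and> (\<forall>u\<in>{0<..<1}. continuous (at_left u) f)"

lemma quantile_eq: "quantile F u = Inf {x. u \<le> F x}"
  by (simp add: quantile_def)

context
  fixes N :: "real measure"
  assumes N: "real_distribution N"
begin

interpretation cdf_distribution N
  by (simp add: cdf_distribution.intro N)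

lemma q_meas: "quantile (cdf N) \<in> borel_measurable U01"
proof -
  have "(\<lambda>\<omega>. Inf {x. \<omega> \<le> cdf N x}) \<in> borel_measurable (restrict_space borel {0<..<1})"
    by (rule measurable_CI)
  then show ?thesis
    unfolding quantile_def U01_def
    by (subst measurable_cong_sets[OF sets_restrict_space_cong[OF sets_lborel] refl]) simp
qed

lemma q_distr: "distr U01 borel (quantile (cdf N)) = N"
  unfolding U01_def quantile_def by (rule distr_I_eq_M)

lemma q_pseudo: "u \<in> {0<..<1} \<Longrightarrow> u \<le> cdf N x \<longleftrightarrow> quantile (cdf N) u \<le> x"
  unfolding quantile_def using pseudoinverse[of u x] by simp

lemma q_mono: "mono_on {0<..<1} (quantile (cdf N))"
  unfolding quantile_def using mono_I by simp

lemma q_leftcont: assumes u: "u \<in> {0<..<1}" shows "continuous (at_left u) (quantile (cdf N))"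
proof -
  let ?q = "quantile (cdf N)"
  have "(?q \<longlongrightarrow> ?q u) (at_left u)"
  proof (rule order_tendstoI)
    fix a assume "a < ?q u"
    then have "cdf N a < u" using q_pseudo[OF u, of a] by simp
    define b where "b = max (cdf N a) 0"
    have "b < u" using u \<open>cdf N a < u\<close> by (simp add: b_def)
    then have "eventually (\<lambda>v. b < v \<and> v < u) (at_left u)"
      by (rule eventually_mono[OF eventually_at_left_real]) auto
    then show "eventually (\<lambda>v. a < ?q v) (at_left u)"
    proof (rule eventually_mono)
      fix v assume v: "b < v \<and> v < u"
      have "0 \<le> b" "cdf N a \<le> b" by (simp_all add: b_def)
      then have v01: "v \<in> {0<..<1}" using u v by simp
      have "\<not> v \<le> cdf N a" using v \<open>cdf N a \<le> b\<close> by simp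
      then show "a < ?q v" using q_pseudo[OF v01, of a] by simp
    qed
  next
    fix a assume "?q u < a"
    have "eventually (\<lambda>v. 0 < v \<and> v < u) (at_left u)"
      using u by (intro eventually_mono[OF eventually_at_left_real[of 0 u]]) auto
    then show "eventually (\<lambda>v. ?q v < a) (at_left u)"
    proof (rule eventually_mono)
      fix v assume v: "0 < v \<and> v < u"
      then have "?q v \<le> ?q u" by (intro mono_onD[OF q_mono]) (use u v in auto)
      then show "?q v < a" using \<open>?q u < a\<close> by simp
    qed
  qed
  then show ?thesis by (simp add: continuous_within)
qed

lemma q_integral: fixes f :: "real \<Rightarrow> real" assumes "f \<in> borel_measurable borel"
  shows "integral\<^sup>L N f = integral\<^sup>L U01 (\<lambda>u. f (quantile (cdf N) u))"
proof -
  have "integral\<^sup>L N f = integral\<^sup>L (distr U01 borel (quantile (cdf N))) f" by (simp add: q_distr)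
  also have "\<dots> = integral\<^sup>L U01 (\<lambda>u. f (quantile (cdf N) u))"
    by (rule integral_distr[OF q_meas assms])
  finally show ?thesis .
qed

lemma q_integrable: fixes f :: "real \<Rightarrow> real" assumes "f \<in> borel_measurable borel"
  shows "integrable N f = integrable U01 (\<lambda>u. f (quantile (cdf N) u))"
proof -
  have "integrable N f = integrable (distr U01 borel (quantile (cdf N))) f" by (simp add: q_distr)
  also have "\<dots> = integrable U01 (\<lambda>u. f (quantile (cdf N) u))"
    by (rule integrable_distr_eq[OF q_meas assms])
  finally show ?thesis .
qed

lemma q_L2: assumes "integrable N (\<lambda>x. x\<^sup>2)" shows "L2 (quantile (cdf N))"
  unfolding L2_def using q_meas assms q_integrable[of "\<lambda>x. x\<^sup>2"] by simp

lemma q_Kc: assumes "integrable N (\<lambda>x. x\<^sup>2)" shows "Kc (quantile (cdf N))"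
  unfolding Kc_def using q_L2[OF assms] q_mono q_leftcont by simp

end

lemma Kc_L2: "Kc f \<Longrightarrow> L2 f" by (simp add: Kc_def)

lemma Kc_cong: assumes "Kc f" "\<And>u. u \<in> {0<..<1} \<Longrightarrow> f u = g u" shows "Kc g"
proof -
  have "L2 g" using assms L2_cong Kc_L2 by blast
  moreover have "mono_on {0<..<1} g" using assms unfolding Kc_def mono_on_def by auto
  moreover have "continuous (at_left u) g" if u: "u \<in> {0<..<1}" for u
  proof -
    have "(f \<longlongrightarrow> f u) (at_left u)" using assms u by (simp add: Kc_def continuous_within)
    moreover have ev: "eventually (\<lambda>v. f v = g v) (at_left u)"
    proof -
      have "eventually (\<lambda>v. 0 < v \<and> v < u) (at_left u)"
        using u by (intro eventually_mono[OF eventually_at_left_real[of 0 u]]) auto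
      then show ?thesis
        by (rule eventually_mono) (use u assms(2) in auto)
    qed
    ultimately have "(g \<longlongrightarrow> f u) (at_left u)" using tendsto_cong[OF ev] by blast
    then show ?thesis using assms(2)[OF u] by (simp add: continuous_within)
  qed
  ultimately show ?thesis by (simp add: Kc_def)
qed

lemma Mq_facts:
  assumes "h \<in> Mq \<mu> \<sigma>"
  shows "Kc h" "integral\<^sup>L U01 h = \<mu>" "integral\<^sup>L U01 (\<lambda>u. (h u - \<mu>)\<^sup>2) = \<sigma>\<^sup>2"
proof -
  obtain N where N: "real_distribution N" "integrable N (\<lambda>x. x\<^sup>2)"
    "prob_space.expectation N (\<lambda>x. x) = \<mu>" "prob_space.variance N (\<lambda>x. x) = \<sigma>\<^sup>2"
    "\<forall>u\<in>{0<..<1}. h u = quantile (cdf N) u"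
    using assms unfolding Mq_def by blast
  show "Kc h" by (rule Kc_cong[OF q_Kc[OF N(1,2)]]) (use N(5) in simp)
  have "integral\<^sup>L U01 h = integral\<^sup>L U01 (quantile (cdf N))"
    using N(5) by (intro Bochner_Integration.integral_cong) auto
  also have "\<dots> = integral\<^sup>L N (\<lambda>x. x)" using q_integral[OF N(1), of "\<lambda>x. x"] by simp
  finally show "integral\<^sup>L U01 h = \<mu>" using N(3) by simp
  have "integral\<^sup>L U01 (\<lambda>u. (h u - \<mu>)\<^sup>2) = integral\<^sup>L U01 (\<lambda>u. (quantile (cdf N) u - \<mu>)\<^sup>2)"
    using N(5) by (intro Bochner_Integration.integral_cong) auto
  also have "\<dots> = integral\<^sup>L N (\<lambda>x. (x - \<mu>)\<^sup>2)" using q_integral[OF N(1), of "\<lambda>x. (x - \<mu>)\<^sup>2"] by simp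
  finally show "integral\<^sup>L U01 (\<lambda>u. (h u - \<mu>)\<^sup>2) = \<sigma>\<^sup>2" using N(3,4) by simp
qed

lemma Kcone_Kc: assumes "k \<in> Kcone" shows "Kc k"
proof -
  have "k \<in> borel_measurable lborel" "set_integrable lborel {0<..<1} (\<lambda>u. (k u)\<^sup>2)"
    using assms by (auto simp: Kcone_def sq_int01_def)
  then have "L2 k" unfolding L2_def set_integrable_U01 using meas_U01_lborel by blast
  then show ?thesis using assms by (simp add: Kc_def Kcone_def)
qed

definition ext0 :: "(real \<Rightarrow> real) \<Rightarrow> real \<Rightarrow> real" where
  "ext0 f u = (if u \<in> {0<..<1} then f u else 0)"

lemma ext0_in: "u \<in> {0<..<1} \<Longrightarrow> ext0 f u = f u" by (simp add: ext0_def)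
lemma ext0_out: "u \<notin> {0<..<1} \<Longrightarrow> ext0 f u = 0" unfolding ext0_def by auto

lemma Kc_ext0: assumes "Kc f" shows "ext0 f \<in> Kcone"
proof -
  have L: "L2 f" using assms by (simp add: Kc_def)
  have "(\<lambda>x. indicator {0<..<1} x *\<^sub>R f x) \<in> borel_measurable lborel"
    using L2_meas[OF L] meas_U01_iff by blast
  moreover have "(\<lambda>x. indicator {0<..<1} x *\<^sub>R f x) = ext0 f"
    by (auto simp: ext0_def indicator_def)
  ultimately have m: "ext0 f \<in> borel_measurable lborel" by simp
  have "integrable U01 (\<lambda>u. (ext0 f u)\<^sup>2) = integrable U01 (\<lambda>u. (f u)\<^sup>2)"
    by (rule Bochner_Integration.integrable_cong) (auto simp: ext0_def)
  then have i: "set_integrable lborel {0<..<1} (\<lambda>u. (ext0 f u)\<^sup>2)"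
    using L2_sq[OF L] set_integrable_U01 by simp
  have "Kc (ext0 f)" using Kc_cong[OF assms, of "ext0 f"] by (simp add: ext0_def)
  then show ?thesis using m i by (simp add: Kcone_def sq_int01_def Kc_def)
qed

lemma L2dist2_ip: "L2dist2 w k = ip (\<lambda>u. w u - k u) (\<lambda>u. w u - k u)"
  unfolding L2dist2_def LINT_U01 ip_self_sq ..

lemma measure_U01_Ioc: assumes "0 \<le> t" "t < 1" shows "measure U01 {0<..t} = t"
proof -
  have "measure U01 {0<..t} = measure lborel {0<..t}"
    unfolding U01_def by (rule measure_restrict_space) (use assms in auto)
  also have "\<dots> = t" using assms by simp
  finally show ?thesis .
qed

lemma sets_U01_iff: "A \<in> sets U01 \<longleftrightarrow> A \<subseteq> {0<..<1} \<and> A \<in> sets borel"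
  unfolding U01_def by (subst sets_restrict_space_iff) auto

lemma Kc_Mq:
  assumes K: "Kc h" and m: "integral\<^sup>L U01 h = \<mu>" and v: "integral\<^sup>L U01 (\<lambda>u. (h u - \<mu>)\<^sup>2) = \<sigma>\<^sup>2"
  shows "h \<in> Mq \<mu> \<sigma>"
proof -
  have L: "L2 h" using K by (simp add: Kc_def)
  have hm: "h \<in> U01 \<rightarrow>\<^sub>M borel" using L2_meas[OF L] by simp
  define N where "N = distr U01 borel h"
  have RD: "real_distribution N" unfolding N_def real_distribution_def real_distribution_axioms_def
    by (auto intro!: prob_space.prob_space_distr prob_U01 hm)
  interpret N: real_distribution N by (rule RD)
  have intN: "integral\<^sup>L N f = integral\<^sup>L U01 (\<lambda>u. f (h u))" if "f \<in> borel_measurable borel" for f :: "real \<Rightarrow> real"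
    unfolding N_def by (rule integral_distr[OF hm that])
  have intbl: "integrable N f = integrable U01 (\<lambda>u. f (h u))" if "f \<in> borel_measurable borel" for f :: "real \<Rightarrow> real"
    unfolding N_def by (rule integrable_distr_eq[OF hm that])
  have sq: "integrable N (\<lambda>x. x\<^sup>2)" using intbl[of "\<lambda>x. x\<^sup>2"] L2_sq[OF L] by simp
  have E: "N.expectation (\<lambda>x. x) = \<mu>" using intN[of "\<lambda>x. x"] m by simp
  have V: "N.variance (\<lambda>x. x) = \<sigma>\<^sup>2" using intN[of "\<lambda>x. (x - \<mu>)\<^sup>2"] E v by simp
  have cdfN: "cdf N x = measure U01 {u\<in>{0<..<1}. h u \<le> x}" for x
    unfolding cdf_def N_def
    by (subst measure_distr[OF hm]) (auto simp: vimage_def Int_def intro!: arg_cong2[where f=measure])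
  have Q: "quantile (cdf N) u = h u" if u: "u \<in> {0<..<1}" for u
  proof -
    let ?S = "{x. u \<le> cdf N x}"
    have mono: "mono_on {0<..<1} h" using K by (simp add: Kc_def)
    have "h u \<in> ?S"
    proof -
      have sub: "{0<..u} \<subseteq> {v\<in>{0<..<1}. h v \<le> h u}"
      proof
        fix v assume v: "v \<in> {0<..u}"
        then have "h v \<le> h u" using u by (intro mono_onD[OF mono]) auto
        then show "v \<in> {v\<in>{0<..<1}. h v \<le> h u}" using v u by auto
      qed
      have "u = measure U01 {0<..u}" using u by (subst measure_U01_Ioc) auto
      also have "\<dots> \<le> measure U01 {v\<in>{0<..<1}. h v \<le> h u}"
      proof (rule U.finite_measure_mono[OF sub])
        have "{v\<in>{0<..<1}. h v \<le> h u} = {v \<in> space U01. h v \<le> h u}" by simp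
        also have "\<dots> = h -` {..h u} \<inter> space U01" by auto
        also have "\<dots> \<in> sets U01" using measurable_sets[OF hm, of "{..h u}"] by simp
        finally show "{v\<in>{0<..<1}. h v \<le> h u} \<in> sets U01" .
      qed
      finally show ?thesis using cdfN by simp
    qed
    moreover have "h u \<le> x" if "x \<in> ?S" for x
    proof (rule ccontr)
      assume "\<not> h u \<le> x"
      then have "x < h u" by simp
      have "(h \<longlongrightarrow> h u) (at_left u)" using K u by (simp add: Kc_def continuous_within)
      then have "eventually (\<lambda>v. x < h v) (at_left u)"
        using \<open>x < h u\<close> by (rule order_tendstoD)
      then obtain b where b: "b < u" "\<And>v. b < v \<Longrightarrow> v < u \<Longrightarrow> x < h v"
        by (auto simp: eventually_at_left_field)
      define b' where "b' = max b 0"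
      have b'0: "0 \<le> b'" "b' < u" using b u by (auto simp: b'_def)
      have sub: "{v\<in>{0<..<1}. h v \<le> x} \<subseteq> {0<..b'}"
      proof
        fix v assume v: "v \<in> {v\<in>{0<..<1}. h v \<le> x}"
        show "v \<in> {0<..b'}"
        proof (rule ccontr)
          assume "v \<notin> {0<..b'}"
          then have "b' < v" using v by auto
          show False
          proof (cases "v < u")
            case True then show ?thesis using b(2)[of v] \<open>b' < v\<close> v by (auto simp: b'_def)
          next
            case False
            then have "h u \<le> h v" using u v by (intro mono_onD[OF mono]) auto
            then show ?thesis using v \<open>x < h u\<close> by auto
          qed
        qed
      qed
      have "u \<le> cdf N x" using that by simp
      also have "\<dots> \<le> measure U01 {0<..b'}"
        unfolding cdfN by (rule U.finite_measure_mono[OF sub]) (use b'0 u in \<open>auto simp: sets_U01_iff\<close>)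
      also have "\<dots> = b'" using b'0 u by (subst measure_U01_Ioc) auto
      finally show False using b'0 by simp
    qed
    ultimately have "Inf ?S = h u" by (rule cInf_eq_minimum)
    then show ?thesis by (simp add: quantile_def)
  qed
  show ?thesis unfolding Mq_def using RD sq E V Q by (intro CollectI exI[of _ N]) simp
qed

definition ismin :: "(real \<Rightarrow> real) \<Rightarrow> (real \<Rightarrow> real) \<Rightarrow> bool" where
  "ismin w k \<longleftrightarrow> k \<in> Kcone \<and> (\<forall>u. u \<notin> {0<..<1} \<longrightarrow> k u = 0) \<and> (\<forall>k'\<in>Kcone. L2dist2 w k \<le> L2dist2 w k')"

lemma kup_ismin: assumes "\<exists>k. ismin (\<lambda>u. \<gamma> u + lam * Q u) k"
  shows "ismin (\<lambda>u. \<gamma> u + lam * Q u) (kup \<gamma> Q lam)"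
  using someI_ex[OF assms[unfolded ismin_def]] unfolding kup_def ismin_def .

lemma ip_expand: assumes "L2 a" "L2 d"
  shows "ip (\<lambda>u. a u - t * d u) (\<lambda>u. a u - t * d u) = ip a a - 2 * t * ip a d + t\<^sup>2 * ip d d"
proof -
  have Lt: "L2 (\<lambda>u. t * d u)" by (rule L2_scale[OF assms(2)])
  show ?thesis
    using assms Lt
    by (simp add: ip_diff_left ip_diff_right L2_diff ip_scale_left ip_scale_right ip_comm[of d a]
        power2_eq_square algebra_simps)
qed

lemma Kc_const[simp]: "Kc (\<lambda>u. c)"
  by (simp add: Kc_def mono_on_def)

lemma Kc_comb: assumes "Kc f" "Kc g" "0 \<le> a" "0 \<le> b"
  shows "Kc (\<lambda>u. a * f u + b * g u + c)"
proof -
  have L: "L2 (\<lambda>u. a * f u + b * g u + c)"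
    using assms by (intro L2_add L2_scale L2_const) (auto simp: Kc_def)
  have M: "mono_on {0<..<1} (\<lambda>u. a * f u + b * g u + c)"
  proof (rule mono_onI)
    fix r s :: real assume rs: "r \<in> {0<..<1}" "s \<in> {0<..<1}" "r \<le> s"
    have "f r \<le> f s" "g r \<le> g s" using assms rs by (auto simp: Kc_def intro: mono_onD)
    then show "a * f r + b * g r + c \<le> a * f s + b * g s + c"
      using assms by (intro add_mono mult_left_mono order.refl) auto
  qed
  have C: "continuous (at_left u) (\<lambda>u. a * f u + b * g u + c)" if "u \<in> {0<..<1}" for u
  proof -
    have "continuous (at_left u) f" "continuous (at_left u) g" using assms that by (auto simp: Kc_def)
    then show ?thesis by (intro continuous_add continuous_mult continuous_const)
  qed
  show ?thesis using L M C by (simp add: Kc_def)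
qed

lemma small_t: fixes B C :: real assumes "\<And>t. 0 < t \<Longrightarrow> t \<le> 1 \<Longrightarrow> 2 * t * B \<le> t\<^sup>2 * C"
  shows "B \<le> 0"
proof (rule ccontr)
  assume "\<not> B \<le> 0" then have B: "B > 0" by simp
  define t where "t = min 1 (B / (\<bar>C\<bar> + 1))"
  have t0: "0 < t" "t \<le> 1" using B by (auto simp: t_def)
  have "2 * t * B \<le> t\<^sup>2 * C" using assms t0 by blast
  then have "2 * B \<le> t * C" using t0 by (simp add: power2_eq_square mult.assoc)
  also have "\<dots> \<le> t * \<bar>C\<bar>" using t0 by (intro mult_left_mono) auto
  also have "\<dots> \<le> (B / (\<bar>C\<bar> + 1)) * \<bar>C\<bar>" by (intro mult_right_mono) (auto simp: t_def)
  also have "\<dots> < B" using B by (simp add: field_simps)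
  finally show False using B by simp
qed

lemma ismin_Kc: "ismin w k \<Longrightarrow> Kc k"
  by (simp add: ismin_def Kcone_Kc)

lemma VI0:
  assumes w: "L2 w" and m: "ismin w k" and f: "Kc f"
  shows "ip (\<lambda>u. w u - k u) (\<lambda>u. f u - k u) \<le> 0"
proof -
  have Kk: "Kc k" using m by (rule ismin_Kc)
  have Lk: "L2 k" "L2 f" using Kk f by (auto simp: Kc_def)
  let ?a = "\<lambda>u. w u - k u" and ?d = "\<lambda>u. f u - k u"
  have La: "L2 ?a" "L2 ?d" using w Lk by (auto intro: L2_diff)
  have "2 * t * ip ?a ?d \<le> t\<^sup>2 * ip ?d ?d" if t: "0 < t" "t \<le> 1" for t
  proof -
    let ?g = "\<lambda>u. (1 - t) * k u + t * f u + 0"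
    have "Kc ?g" using t by (intro Kc_comb Kk f) auto
    then have "ext0 ?g \<in> Kcone" by (rule Kc_ext0)
    then have "L2dist2 w k \<le> L2dist2 w (ext0 ?g)" using m by (simp add: ismin_def)
    also have "L2dist2 w (ext0 ?g) = ip (\<lambda>u. ?a u - t * ?d u) (\<lambda>u. ?a u - t * ?d u)"
      unfolding L2dist2_ip by (rule ip_cong) (auto simp: ext0_def algebra_simps)
    also have "\<dots> = ip ?a ?a - 2 * t * ip ?a ?d + t\<^sup>2 * ip ?d ?d" by (rule ip_expand[OF La])
    finally show ?thesis unfolding L2dist2_ip by simp
  qed
  then show ?thesis by (rule small_t)
qed

lemma VI:
  assumes w: "L2 w" and m: "ismin w k"
  shows "\<And>f. Kc f \<Longrightarrow> ip (\<lambda>u. w u - k u) f \<le> 0"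
    and "ip (\<lambda>u. w u - k u) k = 0"
    and "integral\<^sup>L U01 (\<lambda>u. w u - k u) = 0"
proof -
  have Kk: "Kc k" using m by (rule ismin_Kc)
  have Lk: "L2 k" using Kk by (auto simp: Kc_def)
  let ?a = "\<lambda>u. w u - k u"
  have La: "L2 ?a" using w Lk by (auto intro: L2_diff)
  have E: "ip ?a (\<lambda>u. f u - k u) = ip ?a f - ip ?a k" if "L2 f" for f
    by (rule ip_diff_right[OF that Lk La])
  have 1: "ip ?a k \<le> 0"
  proof -
    have "Kc (\<lambda>u. 2 * k u + 0 * k u + 0)" by (rule Kc_comb[OF Kk Kk]) auto
    then have "Kc (\<lambda>u. 2 * k u)" by simp
    from VI0[OF w m this] have "ip ?a (\<lambda>u. 2 * k u - k u) \<le> 0" .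
    then show ?thesis by simp
  qed
  have 2: "ip ?a k \<ge> 0"
  proof -
    from VI0[OF w m Kc_const[of 0]] have "ip ?a (\<lambda>u. 0 - k u) \<le> 0" .
    then have "ip ?a (\<lambda>u. (-1) * k u) \<le> 0" by simp
    then show ?thesis unfolding ip_scale_right by simp
  qed
  show ak: "ip ?a k = 0" using 1 2 by simp
  have 3: "c * integral\<^sup>L U01 ?a \<le> 0" for c
  proof -
    have "Kc (\<lambda>u. 1 * k u + 0 * k u + c)" by (rule Kc_comb[OF Kk Kk]) auto
    from VI0[OF w m this] have "ip ?a (\<lambda>u. 1 * k u + 0 * k u + c - k u) \<le> 0" .
    then show ?thesis by (simp add: ip_const_right)
  qed
  show "integral\<^sup>L U01 ?a = 0" using 3[of 1] 3[of "-1"] by simp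
  fix f assume f: "Kc f"
  have "ip ?a (\<lambda>u. f u - k u) \<le> 0" by (rule VI0[OF w m f])
  then show "ip ?a f \<le> 0" using E[of f] f ak by (simp add: Kc_def)
qed

lemma sq_le_imp: fixes x a :: real assumes "x\<^sup>2 \<le> a * x" "0 \<le> x" "0 \<le> a" shows "x \<le> a"
proof (cases "x = 0")
  case False then have "x > 0" using assms by simp
  then show ?thesis using assms by (simp add: power2_eq_square)
qed (use assms in simp)

lemma nonexp:
  assumes w1: "L2 w1" and w2: "L2 w2" and m1: "ismin w1 k1" and m2: "ismin w2 k2"
  shows "ip (\<lambda>u. k1 u - k2 u) (\<lambda>u. k1 u - k2 u) \<le> ip (\<lambda>u. w1 u - w2 u) (\<lambda>u. w1 u - w2 u)"
proof -
  have K1: "Kc k1" and K2: "Kc k2" using m1 m2 by (auto intro: ismin_Kc)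
  have L1: "L2 k1" and L2': "L2 k2" using K1 K2 by (auto simp: Kc_def)
  let ?dk = "\<lambda>u. k1 u - k2 u" and ?dw = "\<lambda>u. w1 u - w2 u"
  have Ldk: "L2 ?dk" and Ldw: "L2 ?dw" using L1 L2' w1 w2 by (auto intro: L2_diff)
  have a: "ip (\<lambda>u. w1 u - k1 u) (\<lambda>u. k2 u - k1 u) \<le> 0" by (rule VI0[OF w1 m1 K2])
  have b: "ip (\<lambda>u. w2 u - k2 u) (\<lambda>u. k1 u - k2 u) \<le> 0" by (rule VI0[OF w2 m2 K1])
  have a': "ip (\<lambda>u. w1 u - k1 u) ?dk \<ge> 0"
  proof -
    have "ip (\<lambda>u. w1 u - k1 u) (\<lambda>u. (-1) * ?dk u) \<le> 0" using a by (simp add: algebra_simps)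
    then show ?thesis unfolding ip_scale_right by simp
  qed
  have "ip (\<lambda>u. w1 u - k1 u) ?dk - ip (\<lambda>u. w2 u - k2 u) ?dk = ip (\<lambda>u. (w1 u - k1 u) - (w2 u - k2 u)) ?dk"
    using w1 w2 L1 L2' Ldk by (subst ip_diff_left) (auto intro: L2_diff)
  also have "(\<lambda>u. (w1 u - k1 u) - (w2 u - k2 u)) = (\<lambda>u. ?dw u - ?dk u)" by (auto simp: algebra_simps)
  also have "ip (\<lambda>u. ?dw u - ?dk u) ?dk = ip ?dw ?dk - ip ?dk ?dk" by (rule ip_diff_left[OF Ldw Ldk Ldk])
  finally have "ip ?dk ?dk \<le> ip ?dw ?dk" using a' b by linarith
  also have "\<dots> \<le> sqrt (ip ?dw ?dw) * sqrt (ip ?dk ?dk)" using ip_CS_abs[OF Ldw Ldk] by linarith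
  finally have "(sqrt (ip ?dk ?dk))\<^sup>2 \<le> sqrt (ip ?dw ?dw) * sqrt (ip ?dk ?dk)"
    using ip_self_nonneg[of ?dk] by simp
  then have "sqrt (ip ?dk ?dk) \<le> sqrt (ip ?dw ?dw)" by (rule sq_le_imp) (auto simp: ip_self_nonneg)
  then show ?thesis by simp
qed

definition tau :: "real \<Rightarrow> real" where "tau x = 1 / (1 + exp x)"
definition sig :: "real \<Rightarrow> real" where "sig u = ln ((1 - u) / u)"

lemma tau_01: "tau x \<in> {0<..<1}"
  unfolding tau_def
  by (metis add_pos_nonneg divide_eq_eq_1 divide_le_eq_1_pos divide_pos_pos
    exp_gt_zero greaterThanLessThan_iff less_add_same_cancel1 less_le zero_less_one order.strict_implies_order)

lemma tau_sig: assumes "u \<in> {0<..<1}" shows "tau (sig u) = u"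
proof -
  have "(1 - u) / u > 0" using assms by simp
  then have "exp (sig u) = (1 - u) / u" by (simp add: sig_def)
  then have "1 + exp (sig u) = 1 / u" using assms by (simp add: field_simps)
  then show ?thesis using assms by (simp add: tau_def)
qed

lemma tau_less: assumes "x < y" shows "tau y < tau x"
proof -
  have "exp x < exp y" using assms by simp
  moreover have "0 < 1 + exp x" "0 < 1 + exp y" using exp_gt_zero[of x] exp_gt_zero[of y] by linarith+
  ultimately show ?thesis unfolding tau_def
    by (intro divide_strict_left_mono) (auto intro: mult_pos_pos)
qed

lemma tau_le: "x \<le> y \<Longrightarrow> tau y \<le> tau x"
  using tau_less by (cases "x = y") (auto simp: le_less)

lemma sig_less: assumes "u \<in> {0<..<1}" "v \<in> {0<..<1}" "u < v" shows "sig v < sig u"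
proof (rule ccontr)
  assume "\<not> sig v < sig u"
  then have "tau (sig v) \<le> tau (sig u)" by (intro tau_le) simp
  then show False using assms by (simp add: tau_sig)
qed

lemma sig_le: assumes "u \<in> {0<..<1}" "v \<in> {0<..<1}" "u \<le> v" shows "sig v \<le> sig u"
  using sig_less[OF assms(1,2)] assms(3) by (cases "u = v") auto

lemma isCont_tau: "isCont tau x"
  unfolding tau_def by (intro continuous_intros) (smt (verit) exp_gt_zero)

lemma isCont_sig: assumes "u \<in> {0<..<1}" shows "isCont sig u"
  unfolding sig_def using assms by (intro continuous_intros) auto

lemma tau_filterlim: "filterlim tau (at_left (tau x)) (at_right x)"
proof -
  have "(tau \<longlongrightarrow> tau x) (at_right x)"
    using isCont_tau[of x] by (simp add: isCont_def filterlim_at_split)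
  moreover have "eventually (\<lambda>y. tau y \<in> {..<tau x} \<and> tau y \<noteq> tau x) (at_right x)"
    by (auto simp: eventually_at_right_field intro!: exI[of _ "x+1"] dest: tau_less)
  ultimately show ?thesis by (simp add: filterlim_at)
qed

lemma sig_filterlim: assumes "u \<in> {0<..<1}" shows "filterlim sig (at_right (sig u)) (at_left u)"
proof -
  have "(sig \<longlongrightarrow> sig u) (at_left u)"
    using isCont_sig[OF assms] by (simp add: isCont_def filterlim_at_split)
  moreover have "eventually (\<lambda>v. sig v \<in> {sig u<..} \<and> sig v \<noteq> sig u) (at_left u)"
  proof -
    have "eventually (\<lambda>v. v \<in> {0<..<u}) (at_left u)"
      using assms by (intro eventually_at_left_real) auto
    then show ?thesis
    proof (rule eventually_mono)
      fix v assume "v \<in> {0<..<u}"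
      then have "sig u < sig v" using assms by (intro sig_less) auto
      then show "sig v \<in> {sig u<..} \<and> sig v \<noteq> sig u" by simp
    qed
  qed
  ultimately show ?thesis by (simp add: filterlim_at)
qed

lemma measure_U01_Ico: assumes "0 < t" "t < 1" shows "measure U01 {t..<1} = 1 - t"
proof -
  have "measure U01 {t..<1} = measure lborel {t..<1}"
    unfolding U01_def by (rule measure_restrict_space) (use assms in auto)
  also have "\<dots> = 1 - t" using assms by simp
  finally show ?thesis .
qed

lemma pointwise_bound:
  assumes K: "Kc k" and u: "u \<in> {0<..<1}"
  shows "(k u)\<^sup>2 * min u (1 - u) \<le> ip k k"
proof -
  have L: "L2 k" using K by (simp add: Kc_def)
  have mono: "mono_on {0<..<1} k" using K by (simp add: Kc_def)
  have ipk: "ip k k = integral\<^sup>L U01 (\<lambda>v. (k v)\<^sup>2)" by (rule ip_self_sq)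
  show ?thesis
  proof (cases "k u \<ge> 0")
    case True
    have "integral\<^sup>L U01 (\<lambda>v. indicator {u..<1} v * (k u)\<^sup>2) \<le> integral\<^sup>L U01 (\<lambda>v. (k v)\<^sup>2)"
    proof (rule integral_mono)
      have "indicator {u..<1} \<in> borel_measurable U01" by (rule meas_U01_lborel) simp
      then show "integrable U01 (\<lambda>v. indicator {u..<1} v * (k u)\<^sup>2)"
        by (intro integrable_mult_left U.integrable_const_bound[where B=1]) auto
      show "integrable U01 (\<lambda>v. (k v)\<^sup>2)" by (rule L2_sq[OF L])
      fix v assume v: "v \<in> space U01"
      show "indicator {u..<1} v * (k u)\<^sup>2 \<le> (k v)\<^sup>2"
      proof (cases "v \<in> {u..<1}")
        case True
        then have "k u \<le> k v" using u v by (intro mono_onD[OF mono]) auto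
        then have "(k u)\<^sup>2 \<le> (k v)\<^sup>2" using \<open>k u \<ge> 0\<close> by (intro power_mono) auto
        then show ?thesis using True by simp
      qed simp
    qed
    moreover have "integral\<^sup>L U01 (\<lambda>v. indicator {u..<1} v * (k u)\<^sup>2) = (1 - u) * (k u)\<^sup>2"
    proof -
      have "integral\<^sup>L U01 (\<lambda>v. indicator {u..<1} v * (k u)\<^sup>2) = integral\<^sup>L U01 (indicator {u..<1}) * (k u)\<^sup>2"
        by (rule integral_mult_left_zero)
      also have "integral\<^sup>L U01 (indicator {u..<1}) = measure U01 {u..<1}"
      proof -
        have "{u..<1} \<inter> {0<..<1} = {u..<1}" using u by auto
        then show ?thesis by simp
      qed
      finally have "integral\<^sup>L U01 (\<lambda>v. indicator {u..<1} v * (k u)\<^sup>2) = measure U01 {u..<1} * (k u)\<^sup>2" .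
      then show ?thesis using u by (simp add: measure_U01_Ico)
    qed
    ultimately have "(1 - u) * (k u)\<^sup>2 \<le> ip k k" using ipk by linarith
    moreover have "(k u)\<^sup>2 * min u (1 - u) \<le> (k u)\<^sup>2 * (1 - u)" by (intro mult_left_mono) auto
    ultimately show ?thesis by (simp add: mult.commute)
  next
    case False
    have "integral\<^sup>L U01 (\<lambda>v. indicator {0<..u} v * (k u)\<^sup>2) \<le> integral\<^sup>L U01 (\<lambda>v. (k v)\<^sup>2)"
    proof (rule integral_mono)
      have "indicator {0<..u} \<in> borel_measurable U01" by (rule meas_U01_lborel) simp
      then show "integrable U01 (\<lambda>v. indicator {0<..u} v * (k u)\<^sup>2)"
        by (intro integrable_mult_left U.integrable_const_bound[where B=1]) auto
      show "integrable U01 (\<lambda>v. (k v)\<^sup>2)" by (rule L2_sq[OF L])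
      fix v assume v: "v \<in> space U01"
      show "indicator {0<..u} v * (k u)\<^sup>2 \<le> (k v)\<^sup>2"
      proof (cases "v \<in> {0<..u}")
        case True
        then have "k v \<le> k u" using u v by (intro mono_onD[OF mono]) auto
        then have "(- k u)\<^sup>2 \<le> (- k v)\<^sup>2" using False by (intro power_mono) auto
        then show ?thesis using True by simp
      qed simp
    qed
    moreover have "integral\<^sup>L U01 (\<lambda>v. indicator {0<..u} v * (k u)\<^sup>2) = u * (k u)\<^sup>2"
    proof -
      have "integral\<^sup>L U01 (\<lambda>v. indicator {0<..u} v * (k u)\<^sup>2) = integral\<^sup>L U01 (indicator {0<..u}) * (k u)\<^sup>2"
        by (rule integral_mult_left_zero)
      also have "integral\<^sup>L U01 (indicator {0<..u}) = measure U01 {0<..u}"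
      proof -
        have "{0<..u} \<inter> {0<..<1} = {0<..u}" using u by auto
        then show ?thesis by simp
      qed
      finally have "integral\<^sup>L U01 (\<lambda>v. indicator {0<..u} v * (k u)\<^sup>2) = measure U01 {0<..u} * (k u)\<^sup>2" .
      then show ?thesis using u by (simp add: measure_U01_Ioc)
    qed
    ultimately have "u * (k u)\<^sup>2 \<le> ip k k" using ipk by linarith
    moreover have "(k u)\<^sup>2 * min u (1 - u) \<le> (k u)\<^sup>2 * u" by (intro mult_left_mono) auto
    ultimately show ?thesis by (simp add: mult.commute)
  qed
qed

lemma nrm_le: assumes "L2 x" "L2 y"
  shows "sqrt (ip x x) \<le> sqrt (ip y y) + sqrt (ip (\<lambda>u. x u - y u) (\<lambda>u. x u - y u))"
proof -
  let ?d = "\<lambda>u. x u - y u"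
  have Ld: "L2 ?d" using assms by (rule L2_diff)
  have e1: "ip ?d ?d = ip x x - 2 * ip x y + ip y y" using ip_expand[OF assms, of 1] by simp
  have e2: "ip y ?d = ip y x - ip y y" by (rule ip_diff_right[OF assms(1) assms(2) assms(2)])
  have "ip x x = ip y y + 2 * ip y ?d + ip ?d ?d" using e1 e2 ip_comm[of x y] by linarith
  also have "\<dots> \<le> ip y y + 2 * (sqrt (ip y y) * sqrt (ip ?d ?d)) + ip ?d ?d"
    using ip_CS_abs[OF assms(2) Ld] by linarith
  also have "\<dots> = (sqrt (ip y y) + sqrt (ip ?d ?d))\<^sup>2"
    using ip_self_nonneg[of y] ip_self_nonneg[of ?d] by (simp add: power2_sum)
  finally have "sqrt (ip x x) \<le> sqrt ((sqrt (ip y y) + sqrt (ip ?d ?d))\<^sup>2)"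
    by (rule real_sqrt_le_mono)
  then show ?thesis using ip_self_nonneg[of y] ip_self_nonneg[of ?d] by simp
qed

lemma AE_U01_countable:
  assumes "countable A" "\<And>u. u \<in> {0<..<1} \<Longrightarrow> u \<notin> A \<Longrightarrow> P u"
  shows "AE u in U01. P u"
proof -
  have "AE u in lborel. u \<in> {0<..<1} \<longrightarrow> P u"
    by (rule AE_I'[OF countable_imp_null_set_lborel[OF assms(1)]]) (use assms(2) in auto)
  then show ?thesis unfolding U01_def by (subst AE_restrict_space_iff) auto
qed

lemma exists_min: assumes w: "L2 w" shows "\<exists>k. ismin w k"
proof -
  define V where "V = (\<lambda>k'. L2dist2 w k') ` Kcone"
  have z: "ext0 (\<lambda>u. 0) \<in> Kcone" by (rule Kc_ext0) simp
  then have Vne: "V \<noteq> {}" by (auto simp: V_def)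
  have bdd: "bdd_below V" unfolding V_def L2dist2_ip by (rule bdd_belowI[of _ 0]) (auto simp: ip_self_nonneg)
  define d where "d = Inf V"
  have d0: "0 \<le> d" unfolding d_def using Vne
    by (intro cInf_greatest) (auto simp: V_def L2dist2_ip ip_self_nonneg)
  have dle: "d \<le> L2dist2 w k'" if "k' \<in> Kcone" for k'
    unfolding d_def by (rule cInf_lower[OF _ bdd]) (use that in \<open>auto simp: V_def\<close>)
  have "\<forall>n. \<exists>k\<in>Kcone. L2dist2 w k < d + 1 / Suc n"
  proof
    fix n :: nat
    have "Inf V < d + 1 / Suc n" unfolding d_def by simp
    from cInf_lessD[OF Vne this] show "\<exists>k\<in>Kcone. L2dist2 w k < d + 1 / Suc n" by (auto simp: V_def)
  qed
  then obtain kk where kkK: "\<And>n. kk n \<in> Kcone" and kkd: "\<And>n. L2dist2 w (kk n) < d + 1 / Suc n"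
    by metis
  have Kkk: "Kc (kk n)" for n using kkK by (rule Kcone_Kc)
  have Lkk: "L2 (kk n)" for n using Kkk by (simp add: Kc_def)
  have monokk: "mono_on {0<..<1} (kk n)" for n using Kkk by (simp add: Kc_def)
  define B where "B = sqrt (ip w w) + sqrt (d + 1)"
  have B0: "0 \<le> B" using d0 ip_self_nonneg[of w] by (simp add: B_def)
  have normk: "ip (kk n) (kk n) \<le> B\<^sup>2" for n
  proof -
    have "sqrt (ip (kk n) (kk n)) \<le> sqrt (ip w w) + sqrt (ip (\<lambda>u. kk n u - w u) (\<lambda>u. kk n u - w u))"
      by (rule nrm_le[OF Lkk w])
    also have "ip (\<lambda>u. kk n u - w u) (\<lambda>u. kk n u - w u) = L2dist2 w (kk n)"
      unfolding L2dist2_ip ip_def by (rule Bochner_Integration.integral_cong) (auto simp: algebra_simps)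
    also have "sqrt (L2dist2 w (kk n)) \<le> sqrt (d + 1)"
    proof -
      have "1 / real (Suc n) \<le> 1" by simp
      then show ?thesis using kkd[of n] by (intro real_sqrt_le_mono) linarith
    qed
    finally have "sqrt (ip (kk n) (kk n)) \<le> B" by (simp add: B_def)
    then have "(sqrt (ip (kk n) (kk n)))\<^sup>2 \<le> B\<^sup>2" by (intro power_mono) (auto simp: ip_self_nonneg)
    then show ?thesis by (simp add: ip_self_nonneg)
  qed
  define Cb where "Cb u = B / sqrt (min u (1 - u))" for u :: real
  have ptb: "\<bar>kk n u\<bar> \<le> Cb u" if u: "u \<in> {0<..<1}" for n u
  proof -
    have m: "0 < min u (1 - u)" using u by simp
    have "(kk n u)\<^sup>2 * min u (1 - u) \<le> B\<^sup>2" using pointwise_bound[OF Kkk u, of n] normk[of n] by linarith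
    then have "(kk n u)\<^sup>2 \<le> B\<^sup>2 / min u (1 - u)" using m by (simp add: field_simps)
    then have "sqrt ((kk n u)\<^sup>2) \<le> sqrt (B\<^sup>2 / min u (1 - u))" by (rule real_sqrt_le_mono)
    then show ?thesis using B0 m by (simp add: Cb_def real_sqrt_divide)
  qed
  define G where "G n x = - arctan (kk n (tau x))" for n x
  have Gmono: "mono (G n)" for n
  proof (rule monoI)
    fix x y :: real assume "x \<le> y"
    then have "kk n (tau y) \<le> kk n (tau x)"
      using tau_01 by (intro mono_onD[OF monokk] tau_le) auto
    then show "G n x \<le> G n y" by (simp add: G_def arctan_monotone')
  qed
  have Gcont: "continuous (at_right x) (G n)" for n x
  proof -
    have "(kk n \<longlongrightarrow> kk n (tau x)) (at_left (tau x))"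
      using Kkk[of n] tau_01[of x] by (simp add: Kc_def continuous_within)
    then have "((\<lambda>y. kk n (tau y)) \<longlongrightarrow> kk n (tau x)) (at_right x)"
      by (rule filterlim_compose[OF _ tau_filterlim])
    then have "(G n \<longlongrightarrow> G n x) (at_right x)" unfolding G_def
      by (intro tendsto_minus tendsto_arctan)
    then show ?thesis by (simp add: continuous_within)
  qed
  have Gbdd: "\<bar>G n x\<bar> \<le> pi / 2" for n x
    unfolding G_def abs_minus_cancel abs_le_iff
    using arctan_lbound[of "kk n (tau x)"] arctan_ubound[of "kk n (tau x)"] by linarith
  obtain s F where s: "strict_mono (s :: nat \<Rightarrow> nat)" and Frc: "\<And>x. continuous (at_right x) F"
    and Fmono: "mono F" and Fbd: "\<And>x. \<bar>F x\<bar> \<le> pi / 2"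
    and Flim: "\<And>x. continuous (at x) F \<Longrightarrow> (\<lambda>n. G (s n) x) \<longlonglongrightarrow> F x"
    using Helly_selection[of G "pi / 2", OF Gcont Gmono Gbdd] by blast
  define D where "D = {a. \<not> isCont F a}"
  have Dc: "countable D" unfolding D_def by (rule mono_ctble_discont[OF Fmono])
  have Fstrict: "- (pi / 2) < F x \<and> F x < pi / 2" for x
  proof
    obtain x1 where x1: "x1 \<in> {x<..}" "x1 \<notin> D" using open_minus_countable[OF Dc, of "{x<..}"] by auto
    let ?u = "tau x1"
    have u01: "?u \<in> {0<..<1}" by (rule tau_01)
    have "G (s n) x1 \<le> arctan (Cb ?u)" for n
    proof -
      have "- kk (s n) ?u \<le> Cb ?u" using ptb[OF u01, of "s n"] by linarith
      then have "arctan (- kk (s n) ?u) \<le> arctan (Cb ?u)" by (rule arctan_monotone')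
      then show ?thesis by (simp add: G_def arctan_minus)
    qed
    moreover have "(\<lambda>n. G (s n) x1) \<longlonglongrightarrow> F x1" using x1 Flim by (simp add: D_def)
    ultimately have "F x1 \<le> arctan (Cb ?u)" by (intro LIMSEQ_le_const2) auto
    moreover have "F x \<le> F x1" using x1 by (intro monoD[OF Fmono]) auto
    ultimately show "F x < pi / 2" using arctan_ubound[of "Cb ?u"] by linarith
  next
    obtain x2 where x2: "x2 \<in> {..<x}" "x2 \<notin> D" using open_minus_countable[OF Dc, of "{..<x}"] by auto
    let ?u = "tau x2"
    have u01: "?u \<in> {0<..<1}" by (rule tau_01)
    have "- arctan (Cb ?u) \<le> G (s n) x2" for n
    proof -
      have "kk (s n) ?u \<le> Cb ?u" using ptb[OF u01, of "s n"] by linarith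
      then have "arctan (kk (s n) ?u) \<le> arctan (Cb ?u)" by (rule arctan_monotone')
      then show ?thesis by (simp add: G_def)
    qed
    moreover have "(\<lambda>n. G (s n) x2) \<longlonglongrightarrow> F x2" using x2 Flim by (simp add: D_def)
    ultimately have "- arctan (Cb ?u) \<le> F x2" by (intro LIMSEQ_le_const) auto
    moreover have "F x2 \<le> F x" using x2 by (intro monoD[OF Fmono]) auto
    ultimately show "- (pi / 2) < F x" using arctan_ubound[of "Cb ?u"] by linarith
  qed
  have cosF: "cos (F x) \<noteq> 0" for x using Fstrict[of x] cos_gt_zero_pi[of "F x"] by simp
  define k where "k u = - tan (F (sig u))" for u
  have kmono: "mono_on {0<..<1} k"
  proof (rule mono_onI)
    fix u v :: real assume uv: "u \<in> {0<..<1}" "v \<in> {0<..<1}" "u \<le> v"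
    have "F (sig v) \<le> F (sig u)" using uv by (intro monoD[OF Fmono] sig_le) auto
    then have "tan (F (sig v)) \<le> tan (F (sig u))"
      using Fstrict[of "sig v"] Fstrict[of "sig u"] by (intro tan_mono_le) auto
    then show "k u \<le> k v" by (simp add: k_def)
  qed
  have kcont: "continuous (at_left u) k" if u: "u \<in> {0<..<1}" for u
  proof -
    have "(F \<longlongrightarrow> F (sig u)) (at_right (sig u))" using Frc[of "sig u"] by (simp add: continuous_within)
    then have "((\<lambda>v. F (sig v)) \<longlongrightarrow> F (sig u)) (at_left u)"
      by (rule filterlim_compose[OF _ sig_filterlim[OF u]])
    then have "((\<lambda>v. tan (F (sig v))) \<longlongrightarrow> tan (F (sig u))) (at_left u)"
      by (rule isCont_tendsto_compose[OF isCont_tan[OF cosF]])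
    then have "(k \<longlongrightarrow> k u) (at_left u)" unfolding k_def by (rule tendsto_minus)
    then show ?thesis by (simp add: continuous_within)
  qed
  have kmeas: "k \<in> borel_measurable U01"
  proof -
    have "k \<in> borel_measurable (restrict_space borel {0<..<1})"
      by (rule borel_measurable_mono_on_fnc[OF kmono])
    then show ?thesis unfolding U01_def
      by (subst measurable_cong_sets[OF sets_restrict_space_cong[OF sets_lborel] refl]) simp
  qed
  have conv: "(\<lambda>n. kk (s n) u) \<longlonglongrightarrow> k u" if u: "u \<in> {0<..<1}" "sig u \<notin> D" for u
  proof -
    have eq: "kk m u = - tan (G m (sig u))" for m
      using u by (simp add: G_def tau_sig tan_arctan)
    have "(\<lambda>n. G (s n) (sig u)) \<longlonglongrightarrow> F (sig u)" using u Flim by (simp add: D_def)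
    then have "(\<lambda>n. tan (G (s n) (sig u))) \<longlonglongrightarrow> tan (F (sig u))"
      by (rule isCont_tendsto_compose[OF isCont_tan[OF cosF]])
    then show ?thesis unfolding eq k_def by (rule tendsto_minus)
  qed
  have AEconv: "AE u in U01. (\<lambda>n. kk (s n) u) \<longlonglongrightarrow> k u"
  proof (rule AE_U01_countable)
    show "countable (tau ` D)" using Dc by simp
    fix u assume u: "u \<in> {0<..<1}" "u \<notin> tau ` D"
    then have "sig u \<notin> D" using tau_sig[OF u(1)] by (metis image_eqI)
    then show "(\<lambda>n. kk (s n) u) \<longlonglongrightarrow> k u" using conv u by blast
  qed
  let ?f = "\<lambda>n u. ennreal ((w u - kk (s n) u)\<^sup>2)"
  have fmeas: "?f n \<in> borel_measurable U01" for n
    using L2_meas[OF w] L2_meas[OF Lkk[of "s n"]] by measurable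
  have wkmeas: "(\<lambda>u. (w u - k u)\<^sup>2) \<in> borel_measurable U01"
    using L2_meas[OF w] kmeas by measurable
  have "(\<integral>\<^sup>+ u. ennreal ((w u - k u)\<^sup>2) \<partial>U01) = (\<integral>\<^sup>+ u. liminf (\<lambda>n. ?f n u) \<partial>U01)"
  proof (rule nn_integral_cong_AE)
    show "AE u in U01. ennreal ((w u - k u)\<^sup>2) = liminf (\<lambda>n. ?f n u)"
      using AEconv
    proof eventually_elim
      case (elim u)
      have "?f n u = ennreal ((w u - kk (s n) u)\<^sup>2)" for n by simp
      have T: "(\<lambda>n. ?f n u) \<longlonglongrightarrow> ennreal ((w u - k u)\<^sup>2)"
        by (intro tendsto_ennrealI tendsto_power tendsto_diff tendsto_const elim)
      have "liminf (\<lambda>n. ?f n u) = ennreal ((w u - k u)\<^sup>2)"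
        by (rule lim_imp_Liminf[OF _ T]) simp
      then show ?case by simp
    qed
  qed
  also have "\<dots> \<le> liminf (\<lambda>n. integral\<^sup>N U01 (?f n))"
    by (rule nn_integral_liminf[OF fmeas])
  also have "\<dots> \<le> liminf (\<lambda>n. ennreal (d + 1 / Suc n))"
  proof (rule Liminf_mono, rule always_eventually, rule allI)
    fix n
    have int: "integrable U01 (\<lambda>u. (w u - kk (s n) u)\<^sup>2)" using L2_sq[OF L2_diff[OF w Lkk]] .
    have "integral\<^sup>N U01 (?f n) = ennreal (integral\<^sup>L U01 (\<lambda>u. (w u - kk (s n) u)\<^sup>2))"
      by (rule nn_integral_eq_integral[OF int]) simp
    also have "integral\<^sup>L U01 (\<lambda>u. (w u - kk (s n) u)\<^sup>2) = L2dist2 w (kk (s n))"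
      by (simp add: L2dist2_ip ip_self_sq)
    also have "\<dots> \<le> d + 1 / Suc n"
    proof -
      have "real (Suc n) \<le> real (Suc (s n))" using seq_suble[OF s, of n] by simp
      then have "1 / real (Suc (s n)) \<le> 1 / real (Suc n)" by (intro divide_left_mono) auto
      then show ?thesis using kkd[of "s n"] by linarith
    qed
    finally show "integral\<^sup>N U01 (?f n) \<le> ennreal (d + 1 / Suc n)" by (simp add: ennreal_leI)
  qed
  also have "\<dots> = ennreal d"
  proof (rule lim_imp_Liminf)
    have "(\<lambda>n. d + inverse (real (Suc n))) \<longlonglongrightarrow> d + 0"
      by (intro tendsto_add tendsto_const LIMSEQ_inverse_real_of_nat)
    then have "(\<lambda>n. d + 1 / real (Suc n)) \<longlonglongrightarrow> d" by (simp add: inverse_eq_divide)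
    then show "(\<lambda>n. ennreal (d + 1 / Suc n)) \<longlonglongrightarrow> ennreal d"
      by (rule tendsto_ennrealI)
  qed simp
  finally have nnle: "(\<integral>\<^sup>+ u. ennreal ((w u - k u)\<^sup>2) \<partial>U01) \<le> ennreal d" .
  have intwk: "integrable U01 (\<lambda>u. (w u - k u)\<^sup>2)"
  proof (rule integrableI_bounded[OF wkmeas])
    have "(\<integral>\<^sup>+ u. ennreal (norm ((w u - k u)\<^sup>2)) \<partial>U01) = (\<integral>\<^sup>+ u. ennreal ((w u - k u)\<^sup>2) \<partial>U01)" by simp
    then show "(\<integral>\<^sup>+ u. ennreal (norm ((w u - k u)\<^sup>2)) \<partial>U01) < \<infinity>"
      using order.strict_trans1[OF nnle ennreal_less_top] by simp
  qed
  have intle: "integral\<^sup>L U01 (\<lambda>u. (w u - k u)\<^sup>2) \<le> d"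
  proof -
    have "ennreal (integral\<^sup>L U01 (\<lambda>u. (w u - k u)\<^sup>2)) = (\<integral>\<^sup>+ u. ennreal ((w u - k u)\<^sup>2) \<partial>U01)"
      by (rule nn_integral_eq_integral[OF intwk, symmetric]) simp
    then have "ennreal (integral\<^sup>L U01 (\<lambda>u. (w u - k u)\<^sup>2)) \<le> ennreal d" using nnle by simp
    then show ?thesis using ennreal_le_iff[OF d0] by blast
  qed
  have "(\<lambda>u. w u - k u) \<in> borel_measurable U01" by (rule borel_measurable_diff[OF L2_meas[OF w] kmeas])
  then have Lwk: "L2 (\<lambda>u. w u - k u)" unfolding L2_def using intwk by simp
  have Lk: "L2 k" using L2_diff[OF w Lwk] by simp
  have Kk: "Kc k" using Lk kmono kcont by (simp add: Kc_def)
  have "ismin w (ext0 k)"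
    unfolding ismin_def
  proof (intro conjI ballI allI impI)
    show "ext0 k \<in> Kcone" by (rule Kc_ext0[OF Kk])
    show "ext0 k u = 0" if "u \<notin> {0<..<1}" for u using that by (rule ext0_out)
    fix k' assume k': "k' \<in> Kcone"
    have "L2dist2 w (ext0 k) = integral\<^sup>L U01 (\<lambda>u. (w u - k u)\<^sup>2)"
      unfolding L2dist2_ip ip_self_sq by (rule Bochner_Integration.integral_cong) (auto simp: ext0_def)
    also have "\<dots> \<le> d" by (rule intle)
    also have "\<dots> \<le> L2dist2 w k'" by (rule dle[OF k'])
    finally show "L2dist2 w (ext0 k) \<le> L2dist2 w k'" .
  qed
  then show ?thesis by blast
qed

definition CCf :: "(real \<Rightarrow> real) \<Rightarrow> real \<Rightarrow> bool" where
  "CCf f x \<longleftrightarrow> (\<forall>m::nat. \<exists>n::nat. \<forall>a b::rat.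
     (x - 1 / Suc n < of_rat a \<and> of_rat a < x \<and> x - 1 / Suc n < of_rat b \<and> of_rat b < x) \<longrightarrow>
       \<bar>f (of_rat a) - f (of_rat b)\<bar> \<le> 1 / Suc m)"

lemma small_inv: fixes e :: real assumes "0 < e" shows "\<exists>n::nat. 1 / Suc n < e"
proof -
  obtain n :: nat where "inverse e < real n" using reals_Archimedean2 by blast
  then have "1 / e < real (Suc n)" by (simp add: inverse_eq_divide)
  then have "1 / real (Suc n) < e" using assms by (simp add: field_simps)
  then show ?thesis by blast
qed

lemma cauchy_real:
  assumes cont: "continuous_on {..<x} f" and C: "CCf f x"
  shows "\<exists>n::nat. \<forall>y z. x - 1 / Suc n < y \<and> y < x \<and> x - 1 / Suc n < z \<and> z < x \<longrightarrow> \<bar>f y - f z\<bar> \<le> 1 / Suc m"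
proof -
  obtain n where n: "\<And>a b::rat. x - 1 / Suc n < of_rat a \<and> of_rat a < x \<and> x - 1 / Suc n < of_rat b \<and> of_rat b < x \<Longrightarrow>
       \<bar>f (of_rat a) - f (of_rat b)\<bar> \<le> 1 / Suc m"
    using C unfolding CCf_def by blast
  let ?lo = "x - 1 / Suc n"
  have "\<bar>f y - f z\<bar> \<le> 1 / Suc m" if yz: "?lo < y" "y < x" "?lo < z" "z < x" for y z
  proof (rule ccontr)
    assume A: "\<not> ?thesis"
    define e where "e = (\<bar>f y - f z\<bar> - 1 / Suc m) / 2"
    have e: "0 < e" unfolding e_def using A by simp
    have "isCont f y" using continuous_on_eq_continuous_at[OF open_lessThan, of x f] cont yz(2) by blast
    then obtain d1 where d1: "0 < d1" "\<And>a. \<bar>a - y\<bar> < d1 \<Longrightarrow> \<bar>f a - f y\<bar> < e"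
      using e unfolding continuous_at_eps_delta dist_real_def by blast
    have "isCont f z" using continuous_on_eq_continuous_at[OF open_lessThan, of x f] cont yz(4) by blast
    then obtain d2 where d2: "0 < d2" "\<And>a. \<bar>a - z\<bar> < d2 \<Longrightarrow> \<bar>f a - f z\<bar> < e"
      using e unfolding continuous_at_eps_delta dist_real_def by blast
    obtain ra where ra: "ra \<in> \<rat>" "max (y - d1) ?lo < ra" "ra < min (y + d1) x"
      using Rats_dense_in_real[of "max (y - d1) ?lo" "min (y + d1) x"] d1 yz by auto
    obtain rb where rb: "rb \<in> \<rat>" "max (z - d2) ?lo < rb" "rb < min (z + d2) x"
      using Rats_dense_in_real[of "max (z - d2) ?lo" "min (z + d2) x"] d2 yz by auto
    obtain a where a: "ra = of_rat a" using ra(1) Rats_cases by blast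
    obtain b where b: "rb = of_rat b" using rb(1) Rats_cases by blast
    have "\<bar>f ra - f rb\<bar> \<le> 1 / Suc m" using n[of a b] ra rb a b by auto
    moreover have "\<bar>f ra - f y\<bar> < e" using d1 ra by (intro d1(2)) auto
    moreover have "\<bar>f rb - f z\<bar> < e" using d2 rb by (intro d2(2)) auto
    ultimately show False unfolding e_def by argo
  qed
  then show ?thesis by blast
qed

lemma core_lim:
  assumes cont: "continuous_on {..<x} f"
  shows "(\<exists>l. (f \<longlongrightarrow> l) (at_left x)) \<longleftrightarrow> CCf f x"
    and "CCf f x \<Longrightarrow> (f \<longlongrightarrow> lim (\<lambda>j. f (x - 1 / Suc j))) (at_left x)"
proof -
  have seq: "(\<lambda>j. x - 1 / real (Suc j)) \<longlonglongrightarrow> x"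
  proof -
    have "(\<lambda>j. x - inverse (real (Suc j))) \<longlonglongrightarrow> x - 0"
      by (intro tendsto_diff tendsto_const LIMSEQ_inverse_real_of_nat)
    then show ?thesis by (simp add: inverse_eq_divide)
  qed
  have seqlt: "x - 1 / real (Suc j) < x" for j by simp
  show lim2: "(f \<longlongrightarrow> lim (\<lambda>j. f (x - 1 / Suc j))) (at_left x)" if C: "CCf f x"
  proof -
    let ?s = "\<lambda>j. x - 1 / real (Suc j)"
    have CR: "\<exists>n::nat. \<forall>y z. x - 1 / Suc n < y \<and> y < x \<and> x - 1 / Suc n < z \<and> z < x \<longrightarrow> \<bar>f y - f z\<bar> \<le> 1 / Suc m" for m
      by (rule cauchy_real[OF cont C])
    have evs: "\<exists>N. \<forall>j\<ge>N. x - 1 / Suc n < ?s j" for n :: nat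
    proof -
      have "x - 1 / Suc n < ?s j" if "j \<ge> Suc n" for j
      proof -
        have "real (Suc n) < real (Suc j)" using that by simp
        then have "1 / real (Suc j) < 1 / real (Suc n)" by (intro divide_strict_left_mono) auto
        then show ?thesis by simp
      qed
      then show ?thesis by blast
    qed
    have "Cauchy (\<lambda>j. f (?s j))"
    proof (rule metric_CauchyI)
      fix e :: real assume "0 < e"
      obtain m :: nat where m: "1 / Suc m < e" using small_inv[OF \<open>0 < e\<close>] by blast
      obtain n where n: "\<And>y z. x - 1 / Suc n < y \<and> y < x \<and> x - 1 / Suc n < z \<and> z < x \<Longrightarrow> \<bar>f y - f z\<bar> \<le> 1 / Suc m"
        using CR[of m] by blast
      obtain N where N: "\<And>j. j \<ge> N \<Longrightarrow> x - 1 / Suc n < ?s j" using evs[of n] by blast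
      show "\<exists>M. \<forall>i\<ge>M. \<forall>j\<ge>M. dist (f (?s i)) (f (?s j)) < e"
      proof (intro exI allI impI)
        fix i j assume "N \<le> i" "N \<le> j"
        then have "\<bar>f (?s i) - f (?s j)\<bar> \<le> 1 / Suc m" using N seqlt by (intro n) auto
        then show "dist (f (?s i)) (f (?s j)) < e" using m by (simp add: dist_real_def)
      qed
    qed
    then obtain l where l: "(\<lambda>j. f (?s j)) \<longlonglongrightarrow> l" using Cauchy_convergent_iff convergent_def by blast
    have "(f \<longlongrightarrow> l) (at_left x)"
    proof (rule tendstoI)
      fix e :: real assume "0 < e"
      then have "0 < e / 2" by simp
      obtain m :: nat where m: "1 / Suc m < e / 2" using small_inv[OF \<open>0 < e / 2\<close>] by blast
      obtain n where n: "\<And>y z. x - 1 / Suc n < y \<and> y < x \<and> x - 1 / Suc n < z \<and> z < x \<Longrightarrow> \<bar>f y - f z\<bar> \<le> 1 / Suc m"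
        using CR[of m] by blast
      obtain N where N: "\<And>j. j \<ge> N \<Longrightarrow> x - 1 / Suc n < ?s j" using evs[of n] by blast
      have "eventually (\<lambda>y. x - 1 / Suc n < y \<and> y < x) (at_left x)"
        by (rule eventually_mono[OF eventually_at_left_real[of "x - 1 / Suc n" x]]) auto
      then show "eventually (\<lambda>y. dist (f y) l < e) (at_left x)"
      proof (rule eventually_mono)
        fix y assume y: "x - 1 / Suc n < y \<and> y < x"
        have "(\<lambda>j. \<bar>f y - f (?s j)\<bar>) \<longlonglongrightarrow> \<bar>f y - l\<bar>"
          by (intro tendsto_intros l)
        moreover have "\<forall>j\<ge>N. \<bar>f y - f (?s j)\<bar> \<le> 1 / Suc m"
        proof (intro allI impI)
          fix j assume "N \<le> j"
          then have "x - 1 / Suc n < ?s j" by (rule N)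
          then show "\<bar>f y - f (?s j)\<bar> \<le> 1 / Suc m" using n[of y "?s j"] y seqlt[of j] by blast
        qed
        ultimately have "\<bar>f y - l\<bar> \<le> 1 / Suc m" by (rule LIMSEQ_le_const2[OF _ exI[of _ N]])
        then show "dist (f y) l < e" using m by (simp add: dist_real_def)
      qed
    qed
    moreover have "lim (\<lambda>j. f (?s j)) = l" using l by (rule limI)
    ultimately show ?thesis by simp
  qed
  show "(\<exists>l. (f \<longlongrightarrow> l) (at_left x)) \<longleftrightarrow> CCf f x"
  proof
    assume "\<exists>l. (f \<longlongrightarrow> l) (at_left x)"
    then obtain l where l: "(f \<longlongrightarrow> l) (at_left x)" by blast
    show "CCf f x" unfolding CCf_def
    proof
      fix m :: nat
      have "0 < 1 / real (2 * Suc m)" by simp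
      then have "eventually (\<lambda>y. dist (f y) l < 1 / real (2 * Suc m)) (at_left x)"
        by (rule tendstoD[OF l])
      then obtain b where b: "b < x" "\<And>y. b < y \<Longrightarrow> y < x \<Longrightarrow> dist (f y) l < 1 / real (2 * Suc m)"
        by (auto simp: eventually_at_left_field)
      obtain n :: nat where n: "1 / Suc n < x - b" using small_inv[of "x - b"] b by auto
      show "\<exists>n::nat. \<forall>a b::rat. (x - 1 / Suc n < of_rat a \<and> of_rat a < x \<and> x - 1 / Suc n < of_rat b \<and> of_rat b < x) \<longrightarrow>
       \<bar>f (of_rat a) - f (of_rat b)\<bar> \<le> 1 / Suc m"
      proof (intro exI allI impI)
        fix a c :: rat
        assume ac: "x - 1 / Suc n < of_rat a \<and> of_rat a < x \<and> x - 1 / Suc n < of_rat c \<and> of_rat c < x"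
        have "dist (f (of_rat a)) l < 1 / real (2 * Suc m)" using ac n by (intro b(2)) auto
        moreover have "dist (f (of_rat c)) l < 1 / real (2 * Suc m)" using ac n by (intro b(2)) auto
        ultimately have "\<bar>f (of_rat a) - f (of_rat c)\<bar> < 2 * (1 / real (2 * Suc m))"
          unfolding dist_real_def by linarith
        also have "\<dots> = 1 / Suc m" by (simp add: field_simps)
        finally show "\<bar>f (of_rat a) - f (of_rat c)\<bar> \<le> 1 / Suc m" by simp
      qed
    qed
  next
    assume "CCf f x" then show "\<exists>l. (f \<longlongrightarrow> l) (at_left x)" using lim2 by blast
  qed
qed

definition gh :: "(real \<Rightarrow> real) \<Rightarrow> real \<Rightarrow> real" where "gh g y = g (max 0 (min 1 y))"
definition qq :: "(real \<Rightarrow> real) \<Rightarrow> real \<Rightarrow> real \<Rightarrow> real" where "qq g x y = (gh g x - gh g y) / (x - y)"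
definition wt :: "(real \<Rightarrow> real) \<Rightarrow> real \<Rightarrow> real" where
  "wt g u = (if CCf (qq g (1 - u)) (1 - u) then lim (\<lambda>j. qq g (1 - u) ((1 - u) - 1 / Suc j)) else (THE L::real. False))"

lemma gcont: assumes "abs_cont_01 g" shows "continuous_on {0..1} g"
  unfolding continuous_on_iff
proof (intro ballI allI impI)
  fix x e :: real assume x: "x \<in> {0..1}" and e: "0 < e"
  obtain d where d: "0 < d" "\<And>(n::nat) (a::nat \<Rightarrow> real) b.
     (\<forall>i<n. 0 \<le> a i \<and> a i \<le> b i \<and> b i \<le> 1) \<and>
     (\<forall>i<n. \<forall>j<n. i \<noteq> j \<longrightarrow> b i \<le> a j \<or> b j \<le> a i) \<and>
     (\<Sum>i<n. b i - a i) < d \<Longrightarrow> (\<Sum>i<n. \<bar>g (b i) - g (a i)\<bar>) < e"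
    using assms e unfolding abs_cont_01_def by blast
  show "\<exists>d>0. \<forall>x'\<in>{0..1}. dist x' x < d \<longrightarrow> dist (g x') (g x) < e"
  proof (intro exI conjI ballI impI)
    show "0 < d" by (rule d(1))
    fix y assume y: "y \<in> {0..1}" "dist y x < d"
    have "max x y - min x y < d" using y by (auto simp: dist_real_def)
    then have "\<bar>g (max x y) - g (min x y)\<bar> < e"
      using d(2)[of 1 "\<lambda>_. min x y" "\<lambda>_. max x y"] x y by auto
    then show "dist (g y) (g x) < e"
      by (cases "x \<le> y") (auto simp: dist_real_def max_def min_def abs_minus_commute)
  qed
qed

lemma gh_cont: assumes "abs_cont_01 g" shows "continuous_on UNIV (gh g)"
proof -
  have c: "continuous_on UNIV (\<lambda>y::real. max 0 (min 1 y))" by (intro continuous_intros)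
  have "continuous_on UNIV (\<lambda>y. g (max 0 (min 1 y)))"
    by (rule continuous_on_compose2[OF gcont[OF assms] c]) auto
  then show ?thesis by (simp add: gh_def[abs_def])
qed

lemma qq_cont: assumes "abs_cont_01 g" shows "continuous_on {..<x} (qq g x)"
proof -
  have "continuous_on {..<x} (gh g)" using gh_cont[OF assms] by (rule continuous_on_subset) auto
  then show ?thesis unfolding qq_def[abs_def]
    by (intro continuous_intros) auto
qed

lemma gh_meas[measurable]: assumes "abs_cont_01 g" shows "gh g \<in> borel_measurable borel"
  by (rule borel_measurable_continuous_onI[OF gh_cont[OF assms]])

lemma wt_meas: assumes ac: "abs_cont_01 g" shows "wt g \<in> borel_measurable borel"
proof -
  note [measurable] = gh_meas[OF ac]
  have p: "Measurable.pred borel (\<lambda>u. CCf (qq g (1 - u)) (1 - u))"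
    unfolding CCf_def qq_def by measurable
  have l: "(\<lambda>u. lim (\<lambda>j. qq g (1 - u) ((1 - u) - 1 / Suc j))) \<in> borel_measurable borel"
    unfolding qq_def by measurable
  have "(\<lambda>u. if CCf (qq g (1 - u)) (1 - u) then lim (\<lambda>j. qq g (1 - u) ((1 - u) - 1 / Suc j)) else (THE L::real. False)) \<in> borel_measurable borel"
    using p l by (intro measurable_If measurable_const) (auto simp: pred_def)
  then show ?thesis unfolding wt_def[abs_def] .
qed

lemma Lim_cong_ev: assumes "eventually (\<lambda>x. f x = f' x) F" shows "Lim F f = Lim F f'"
  by (rule Lim_cong[OF assms refl])

lemma weight_wt: assumes ac: "abs_cont_01 g" and u: "u \<in> {0<..<1}" shows "weight g u = wt g u"
proof -
  define x where "x = 1 - u"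
  have x: "0 < x" "x < 1" using u by (auto simp: x_def)
  have ev: "eventually (\<lambda>y. (g x - g y) / (x - y) = qq g x y) (at_left x)"
  proof -
    have "eventually (\<lambda>y. y \<in> {0<..<x}) (at_left x)" using x by (intro eventually_at_left_real) auto
    then show ?thesis
    proof (rule eventually_mono)
      fix y assume "y \<in> {0<..<x}"
      then show "(g x - g y) / (x - y) = qq g x y" using x by (simp add: qq_def gh_def)
    qed
  qed
  have "weight g u = Lim (at_left x) (qq g x)"
    unfolding weight_def left_deriv_def x_def[symmetric] by (rule Lim_cong_ev[OF ev])
  also have "\<dots> = wt g u"
  proof (cases "CCf (qq g x) x")
    case True
    then have "(qq g x \<longlongrightarrow> lim (\<lambda>j. qq g x (x - 1 / Suc j))) (at_left x)"
      by (rule core_lim(2)[OF qq_cont[OF ac]])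
    then have "Lim (at_left x) (qq g x) = lim (\<lambda>j. qq g x (x - 1 / Suc j))"
      by (rule tendsto_Lim[rotated]) simp
    then show ?thesis using True by (simp add: wt_def x_def)
  next
    case False
    then have "\<not> (\<exists>l. (qq g x \<longlongrightarrow> l) (at_left x))" using core_lim(1)[OF qq_cont[OF ac]] by blast
    then have "(\<lambda>L. (qq g x \<longlongrightarrow> L) (at_left x)) = (\<lambda>L. False)" by auto
    then have "Lim (at_left x) (qq g x) = (THE L::real. False)" unfolding t2_space_class.Lim_def by simp
    then show ?thesis using False by (simp add: wt_def x_def)
  qed
  finally show ?thesis .
qed

lemma weight_L2:
  assumes ac: "abs_cont_01 g" and si: "set_integrable lborel {0<..<1} (\<lambda>u. (weight g u)\<^sup>2)"
  shows "L2 (weight g)"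
proof -
  have "wt g \<in> borel_measurable U01" by (rule meas_U01_lborel) (simp add: wt_meas[OF ac])
  then have "weight g \<in> borel_measurable U01"
    by (subst measurable_cong[where g="wt g"]) (auto simp: weight_wt[OF ac])
  then show ?thesis using si unfolding L2_def set_integrable_U01 by simp
qed

lemma int_lin: assumes "L2 f" shows "integral\<^sup>L U01 (\<lambda>u. a * f u + b) = a * integral\<^sup>L U01 f + b"
proof -
  have "integral\<^sup>L U01 (\<lambda>u. a * f u + b) = integral\<^sup>L U01 (\<lambda>u. a * f u) + integral\<^sup>L U01 (\<lambda>u. b)"
    using L2_int[OF assms] by (intro Bochner_Integration.integral_add) auto
  moreover have "U.prob {0<..<1} = 1" using U.prob_space by simp
  ultimately show ?thesis by simp
qed

lemma ip_lin_left: assumes "L2 f" "L2 g"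
  shows "ip (\<lambda>u. a * f u + b) g = a * ip f g + b * integral\<^sup>L U01 g"
proof -
  have "ip (\<lambda>u. a * f u + b) g = ip (\<lambda>u. a * f u) g + ip (\<lambda>u. b) g"
    using assms by (intro ip_add_left L2_scale) auto
  then show ?thesis by (simp add: ip_scale_left ip_const_left)
qed

lemma ip_lin_right: assumes "L2 f" "L2 g"
  shows "ip g (\<lambda>u. a * f u + b) = a * ip g f + b * integral\<^sup>L U01 g"
  using ip_lin_left[OF assms] by (simp add: ip_comm)

lemma int_diff: assumes "L2 f" "L2 g" shows "integral\<^sup>L U01 (\<lambda>u. f u - g u) = integral\<^sup>L U01 f - integral\<^sup>L U01 g"
  using assms by (intro Bochner_Integration.integral_diff L2_int)

lemma LC_AE:
  fixes f g :: "real \<Rightarrow> real"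
  assumes cf: "\<And>u. u \<in> {0<..<1} \<Longrightarrow> continuous (at_left u) f"
    and cg: "\<And>u. u \<in> {0<..<1} \<Longrightarrow> continuous (at_left u) g"
    and ae: "AE u in U01. f u = g u"
    and u: "u \<in> {0<..<1}"
  shows "f u = g u"
proof (rule ccontr)
  assume ne: "f u \<noteq> g u"
  have "((\<lambda>v. f v - g v) \<longlongrightarrow> f u - g u) (at_left u)"
    using cf[OF u] cg[OF u] by (intro tendsto_diff) (auto simp: continuous_within)
  moreover have "f u - g u \<noteq> 0" using ne by simp
  ultimately have "eventually (\<lambda>v. f v - g v \<noteq> 0) (at_left u)" by (rule tendsto_imp_eventually_ne)
  then obtain b where b: "b < u" "\<And>v. b < v \<Longrightarrow> v < u \<Longrightarrow> f v - g v \<noteq> 0"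
    by (auto simp: eventually_at_left_field)
  define b' where "b' = max b 0"
  have b': "0 \<le> b'" "b' < u" "b \<le> b'" using b u by (auto simp: b'_def)
  from ae obtain N where N: "{x \<in> space U01. \<not> f x = g x} \<subseteq> N" "emeasure U01 N = 0" "N \<in> sets U01"
    by (rule AE_E)
  have sub: "{b'<..<u} \<subseteq> N"
  proof
    fix v assume v: "v \<in> {b'<..<u}"
    then have "f v \<noteq> g v" using b(2)[of v] b' by auto
    then show "v \<in> N" using N(1) v b' u by auto
  qed
  have "emeasure U01 {b'<..<u} = emeasure lborel {b'<..<u}"
    unfolding U01_def by (rule emeasure_restrict_space) (use b' u in auto)
  also have "\<dots> = ennreal (u - b')" using b' by simp
  finally have "emeasure U01 {b'<..<u} > 0" using b' by simp
  moreover have "emeasure U01 {b'<..<u} \<le> emeasure U01 N" by (rule emeasure_mono[OF sub N(3)])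
  ultimately show False using N(2) by simp
qed

lemma LC_AE_Kc: assumes "Kc f" "Kc g" "AE u in U01. f u = g u" "u \<in> {0<..<1}" shows "f u = g u"
  using assms by (intro LC_AE[of f g]) (auto simp: Kc_def)

lemma Cheb:
  assumes KQ: "Kc Q" and Kf: "Kc f"
  shows "0 \<le> ip (\<lambda>u. Q u - integral\<^sup>L U01 Q) f"
proof -
  have LQ: "L2 Q" and Lf: "L2 f" using KQ Kf by (auto simp: Kc_def)
  have mQ: "mono_on {0<..<1} Q" and mf: "mono_on {0<..<1} f" using KQ Kf by (auto simp: Kc_def)
  define m where "m = integral\<^sup>L U01 f"
  define EQ where "EQ = integral\<^sup>L U01 Q"
  have key: "ip (\<lambda>u. Q u - EQ) f = ip (\<lambda>u. Q u - c) (\<lambda>u. f u - m)" for c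
  proof -
    have "ip (\<lambda>u. Q u - c) (\<lambda>u. f u - m) = ip (\<lambda>u. 1 * Q u + (- c)) (\<lambda>u. 1 * f u + (- m))" by simp
    also have "\<dots> = 1 * ip (\<lambda>u. 1 * Q u + (- c)) f + (- m) * integral\<^sup>L U01 (\<lambda>u. 1 * Q u + (- c))"
      by (rule ip_lin_right[OF Lf]) (use LQ in \<open>intro L2_add L2_scale L2_const\<close>)
    also have "ip (\<lambda>u. 1 * Q u + (- c)) f = ip Q f - c * m"
      by (subst ip_lin_left[OF LQ Lf]) (simp add: m_def)
    also have "integral\<^sup>L U01 (\<lambda>u. 1 * Q u + (- c)) = EQ - c"
      by (subst int_lin[OF LQ]) (simp add: EQ_def)
    also have "ip (\<lambda>u. Q u - EQ) f = ip Q f - EQ * m"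
      using ip_lin_left[OF LQ Lf, of 1 "- EQ"] by (simp add: m_def)
    ultimately show ?thesis by (simp add: algebra_simps)
  qed
  define A where "A = {u \<in> {0<..<1}. f u \<le> m}"
  have intfm: "integral\<^sup>L U01 (\<lambda>u. f u - m) = 0"
    using int_lin[OF Lf, of 1 "- m"] by (simp add: m_def)
  show ?thesis
  proof (cases "A = {}")
    case True
    then have pos: "\<And>u. u \<in> {0<..<1} \<Longrightarrow> 0 < f u - m" by (auto simp: A_def)
    have i: "integrable U01 (\<lambda>u. f u - m)" by (rule L2_int[OF L2_diff[OF Lf L2_const]])
    have nn: "AE u in U01. 0 \<le> f u - m" by (rule AE_I2) (use pos in \<open>simp add: less_imp_le\<close>)
    have "AE u in U01. f u - m = 0"
      using Bochner_Integration.integral_nonneg_eq_0_iff_AE[OF i nn] intfm by simp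
    moreover have "AE u in U01. f u - m = 0 \<longrightarrow> False"
    proof (rule AE_I2)
      fix u assume "u \<in> space U01"
      then have "0 < f u - m" using pos by simp
      then show "f u - m = 0 \<longrightarrow> False" by simp
    qed
    ultimately have "AE u in U01. False" by (rule AE_mp)
    then show ?thesis by simp
  next
    case Ane: False
    show ?thesis
    proof (cases "\<forall>u\<in>{0<..<1}. f u \<le> m")
      case True
      have i: "integrable U01 (\<lambda>u. m - f u)" by (rule L2_int[OF L2_diff[OF L2_const Lf]])
      have nn: "AE u in U01. 0 \<le> m - f u" by (rule AE_I2) (use True in simp)
      have "integral\<^sup>L U01 (\<lambda>u. m - f u) = 0" using int_lin[OF Lf, of "-1" m] by (simp add: m_def)
      then have "AE u in U01. m - f u = 0"
        using Bochner_Integration.integral_nonneg_eq_0_iff_AE[OF i nn] by simp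
      then have "AE u in U01. (Q u - EQ) * f u = (Q u - EQ) * m" by eventually_elim simp
      then have "ip (\<lambda>u. Q u - EQ) f = ip (\<lambda>u. Q u - EQ) (\<lambda>u. m)"
        unfolding ip_def by (rule integral_cong_AE[rotated 2])
          (use L2_meas[OF LQ] L2_meas[OF Lf] in measurable)
      also have "\<dots> = m * integral\<^sup>L U01 (\<lambda>u. Q u - EQ)" by (rule ip_const_right)
      also have "integral\<^sup>L U01 (\<lambda>u. Q u - EQ) = 0"
        using int_lin[OF LQ, of 1 "- EQ"] by (simp add: EQ_def)
      finally show ?thesis by (simp add: EQ_def)
    next
      case False
      then obtain v where v: "v \<in> {0<..<1}" "m < f v" by auto
      have Abdd: "\<And>x. x \<in> A \<Longrightarrow> x < v"
      proof (rule ccontr)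
        fix x assume x: "x \<in> A" "\<not> x < v"
        then have "f v \<le> f x" using v by (intro mono_onD[OF mf]) (auto simp: A_def)
        then show False using x v by (auto simp: A_def)
      qed
      define t0 where "t0 = Sup A"
      have bddA: "bdd_above A" by (rule bdd_aboveI[of _ v]) (use Abdd in \<open>simp add: less_imp_le\<close>)
      obtain a where a: "a \<in> A" using Ane by auto
      have t0a: "a \<le> t0" unfolding t0_def by (rule cSup_upper[OF a bddA])
      have t0v: "t0 \<le> v" unfolding t0_def using Ane Abdd by (intro cSup_least) (auto intro: less_imp_le)
      have t001: "t0 \<in> {0<..<1}" using t0a t0v a v by (auto simp: A_def)
      have "0 \<le> ip (\<lambda>u. Q u - Q t0) (\<lambda>u. f u - m)"
        unfolding ip_def
      proof (rule Bochner_Integration.integral_nonneg)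
        fix u assume u: "u \<in> space U01"
        then have u01: "u \<in> {0<..<1}" by simp
        show "0 \<le> (Q u - Q t0) * (f u - m)"
        proof (cases "u < t0")
          case True
          then obtain x where x: "x \<in> A" "u < x" using less_cSup_iff[OF Ane bddA] by (auto simp: t0_def)
          then have "f u \<le> f x" using u01 by (intro mono_onD[OF mf]) (auto simp: A_def)
          then have "f u - m \<le> 0" using x by (auto simp: A_def)
          moreover have "Q u \<le> Q t0" using u01 t001 True by (intro mono_onD[OF mQ]) auto
          ultimately show ?thesis by (simp add: mult_nonpos_nonpos)
        next
          case False
          show ?thesis
          proof (cases "u = t0")
            case True then show ?thesis by simp
          next
            case ne: False
            then have "t0 < u" using False by simp
            then have "u \<notin> A" using cSup_upper[OF _ bddA, of u] by (auto simp: t0_def)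
            then have "0 \<le> f u - m" using u01 by (auto simp: A_def)
            moreover have "Q t0 \<le> Q u" using u01 t001 \<open>t0 < u\<close> by (intro mono_onD[OF mQ]) auto
            ultimately show ?thesis by simp
          qed
        qed
      qed
      then show ?thesis using key[of "Q t0"] by (simp add: EQ_def)
    qed
  qed
qed

lemma prob01[simp]: "measure U01 {0<..<1} = 1" using U.prob_space by simp

lemma EU_eq: "EU f = integral\<^sup>L U01 f" unfolding EU_def by (rule LINT_U01)

lemma stdU_eq: "stdU f = sqrt (ip (\<lambda>u. f u - EU f) (\<lambda>u. f u - EU f))"
  unfolding stdU_def LINT_U01 ip_self_sq ..

lemma obj_eq: "obj w h = ip w h" unfolding obj_def LINT_U01 ip_def ..

lemma Kc_affine: assumes "Kc k" "0 \<le> p" shows "Kc (\<lambda>u. p * k u + q)"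
  using Kc_comb[OF assms(1) assms(1) assms(2), of 0 q] by simp

lemma std_pos:
  assumes K: "Kc k" and nc: "\<not> (\<exists>c. \<forall>u\<in>{0<..<1}. k u = c)"
  shows "0 < stdU k"
proof -
  let ?d = "\<lambda>u. k u - EU k"
  have L: "L2 ?d" using K by (intro L2_diff) (auto simp: Kc_def)
  have "stdU k \<noteq> 0"
  proof
    assume "stdU k = 0"
    then have "ip ?d ?d = 0" unfolding stdU_eq using ip_self_nonneg[of ?d] by simp
    then have "AE u in U01. ?d u = 0" by (rule ip_self_zero_AE[OF L])
    then have ae: "AE u in U01. k u = EU k" by simp
    have "k u = EU k" if "u \<in> {0<..<1}" for u
      by (rule LC_AE_Kc[OF K Kc_const ae that])
    then show False using nc by blast
  qed
  moreover have "0 \<le> stdU k" unfolding stdU_eq by (simp add: ip_self_nonneg)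
  ultimately show ?thesis by simp
qed

lemma OPT:
  fixes \<mu> \<sigma> :: real
  assumes w: "L2 w" and m: "ismin w k" and B: "0 < stdU k" and sig: "0 < \<sigma>"
  defines "hs \<equiv> \<lambda>u. \<mu> + \<sigma> * (k u - EU k) / stdU k"
  shows "hs \<in> Mq \<mu> \<sigma>"
    and "\<And>h. h \<in> Mq \<mu> \<sigma> \<Longrightarrow> obj w h \<le> obj w hs"
    and "\<And>h. h \<in> Mq \<mu> \<sigma> \<Longrightarrow> obj w h = obj w hs \<Longrightarrow> \<forall>u\<in>{0<..<1}. h u = hs u"
proof -
  have Kk: "Kc k" using m by (rule ismin_Kc)
  have Lk: "L2 k" using Kk by (simp add: Kc_def)
  define a where "a = EU k"
  define b where "b = stdU k"
  have b0: "0 < b" using B by (simp add: b_def)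
  have a_int: "a = integral\<^sup>L U01 k" by (simp add: a_def EU_eq)
  let ?ka = "\<lambda>u. k u - a"
  have Lka: "L2 ?ka" using Lk by (intro L2_diff) auto
  have bsq: "ip ?ka ?ka = b\<^sup>2" unfolding b_def stdU_eq a_def using ip_self_nonneg[of ?ka] by (simp add: a_def)
  have inka: "integral\<^sup>L U01 ?ka = 0" using int_diff[OF Lk L2_const, of a] by (simp add: a_int)
  have hs_eq: "hs = (\<lambda>u. (\<sigma> / b) * k u + (\<mu> - \<sigma> * a / b))"
    unfolding hs_def a_def b_def using B by (auto simp: field_simps)
  have Khs: "Kc hs" unfolding hs_eq using sig b0 by (intro Kc_affine Kk) auto
  have Lhs: "L2 hs" using Khs by (simp add: Kc_def)
  have int_hs: "integral\<^sup>L U01 hs = \<mu>" unfolding hs_eq int_lin[OF Lk] a_int[symmetric] by simp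
  have var_hs: "integral\<^sup>L U01 (\<lambda>u. (hs u - \<mu>)\<^sup>2) = \<sigma>\<^sup>2"
  proof -
    have "(\<lambda>u. (hs u - \<mu>)\<^sup>2) = (\<lambda>u. (\<sigma> / b)\<^sup>2 * (?ka u)\<^sup>2)"
      unfolding hs_def a_def b_def by (auto simp: power_divide power_mult_distrib)
    then have "integral\<^sup>L U01 (\<lambda>u. (hs u - \<mu>)\<^sup>2) = (\<sigma> / b)\<^sup>2 * ip ?ka ?ka"
      by (simp add: ip_self_sq)
    also have "\<dots> = \<sigma>\<^sup>2" using bsq b0 by (simp add: power_divide)
    finally show ?thesis .
  qed
  show "hs \<in> Mq \<mu> \<sigma>" by (rule Kc_Mq[OF Khs int_hs var_hs])
  have VI1: "\<And>f. Kc f \<Longrightarrow> ip (\<lambda>u. w u - k u) f \<le> 0" by (rule VI(1)[OF w m])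
  have VI2: "ip (\<lambda>u. w u - k u) k = 0" by (rule VI(2)[OF w m])
  have VI3: "integral\<^sup>L U01 (\<lambda>u. w u - k u) = 0" by (rule VI(3)[OF w m])
  let ?wk = "\<lambda>u. w u - k u"
  have Lwk: "L2 ?wk" using w Lk by (rule L2_diff)
  have split: "ip w h = ip ?wk h + ip ?ka (\<lambda>u. h u - \<mu>) + a * \<mu>"
    if Lh: "L2 h" and ih: "integral\<^sup>L U01 h = \<mu>" for h
  proof -
    have "ip w h = ip (\<lambda>u. ?wk u + k u) h" by simp
    also have "\<dots> = ip ?wk h + ip k h" by (rule ip_add_left[OF Lwk Lk Lh])
    also have "ip k h = ip (\<lambda>u. 1 * ?ka u + a) h" by simp
    also have "\<dots> = 1 * ip ?ka h + a * \<mu>" by (subst ip_lin_left[OF Lka Lh]) (simp add: ih)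
    also have "ip ?ka h = ip ?ka (\<lambda>u. 1 * h u + (- \<mu>))" by (subst ip_lin_right[OF Lh Lka]) (simp add: inka)
    finally show ?thesis by simp
  qed
  have obj_hs: "obj w hs = a * \<mu> + \<sigma> * b"
  proof -
    have "ip ?wk hs = (\<sigma> / b) * ip ?wk k + (\<mu> - \<sigma> * a / b) * integral\<^sup>L U01 ?wk"
      unfolding hs_eq by (rule ip_lin_right[OF Lk Lwk])
    then have z: "ip ?wk hs = 0" using VI2 VI3 by simp
    have "ip ?ka (\<lambda>u. hs u - \<mu>) = ip ?ka (\<lambda>u. (\<sigma> / b) * ?ka u + 0)"
      unfolding hs_def a_def b_def by (rule ip_cong) (auto simp: field_simps)
    also have "\<dots> = (\<sigma> / b) * b\<^sup>2" by (subst ip_lin_right[OF Lka Lka]) (simp add: bsq)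
    also have "\<dots> = \<sigma> * b" using b0 by (simp add: power2_eq_square)
    finally show ?thesis unfolding obj_eq using split[OF Lhs int_hs] z by simp
  qed
  have bound: "ip ?ka (\<lambda>u. h u - \<mu>) \<le> b * \<sigma>"
    and facts: "Kc h" "L2 h" "integral\<^sup>L U01 h = \<mu>" "ip (\<lambda>u. h u - \<mu>) (\<lambda>u. h u - \<mu>) = \<sigma>\<^sup>2"
    if h: "h \<in> Mq \<mu> \<sigma>" for h
  proof -
    show Kh: "Kc h" using Mq_facts(1)[OF h] .
    show Lh: "L2 h" using Kh by (simp add: Kc_def)
    show ih: "integral\<^sup>L U01 h = \<mu>" using Mq_facts(2)[OF h] .
    show vh: "ip (\<lambda>u. h u - \<mu>) (\<lambda>u. h u - \<mu>) = \<sigma>\<^sup>2" using Mq_facts(3)[OF h] by (simp add: ip_self_sq)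
    have Lhm: "L2 (\<lambda>u. h u - \<mu>)" using Lh by (intro L2_diff) auto
    have "ip ?ka (\<lambda>u. h u - \<mu>) \<le> sqrt (ip ?ka ?ka) * sqrt (ip (\<lambda>u. h u - \<mu>) (\<lambda>u. h u - \<mu>))"
      using ip_CS_abs[OF Lka Lhm] by linarith
    also have "\<dots> = b * \<sigma>" using bsq vh b0 sig by simp
    finally show "ip ?ka (\<lambda>u. h u - \<mu>) \<le> b * \<sigma>" .
  qed
  show "obj w h \<le> obj w hs" if h: "h \<in> Mq \<mu> \<sigma>" for h
  proof -
    have "obj w h = ip ?wk h + ip ?ka (\<lambda>u. h u - \<mu>) + a * \<mu>"
      unfolding obj_eq using split facts[OF h] by blast
    moreover have "ip ?wk h \<le> 0" using VI1 facts(1)[OF h] by blast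
    ultimately show ?thesis using bound[OF h] obj_hs by (simp add: mult.commute)
  qed
  show "\<forall>u\<in>{0<..<1}. h u = hs u" if h: "h \<in> Mq \<mu> \<sigma>" and eq: "obj w h = obj w hs" for h
  proof -
    have Lh: "L2 h" using facts(2)[OF h] .
    let ?hm = "\<lambda>u. h u - \<mu>"
    have Lhm: "L2 ?hm" using Lh by (intro L2_diff) auto
    have "obj w h = ip ?wk h + ip ?ka ?hm + a * \<mu>"
      unfolding obj_eq using split facts[OF h] by blast
    moreover have "ip ?wk h \<le> 0" using VI1 facts(1)[OF h] by blast
    ultimately have e1: "ip ?ka ?hm = b * \<sigma>" using bound[OF h] obj_hs eq by (simp add: mult.commute)
    let ?d = "\<lambda>u. ?hm u - (\<sigma> / b) * ?ka u"
    have "ip ?d ?d = ip ?hm ?hm - 2 * (\<sigma> / b) * ip ?hm ?ka + (\<sigma> / b)\<^sup>2 * ip ?ka ?ka"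
      by (rule ip_expand[OF Lhm Lka])
    also have "\<dots> = 0"
    proof -
      have c1: "(\<sigma> / b) * (b * \<sigma>) = \<sigma>\<^sup>2" using b0 by (simp add: power2_eq_square)
      have c2: "(\<sigma> / b)\<^sup>2 * b\<^sup>2 = \<sigma>\<^sup>2" using b0 by (simp add: power_divide)
      have "ip ?hm ?ka = b * \<sigma>" using e1 by (simp add: ip_comm)
      then have "ip ?hm ?hm - 2 * (\<sigma> / b) * ip ?hm ?ka + (\<sigma> / b)\<^sup>2 * ip ?ka ?ka
          = \<sigma>\<^sup>2 - 2 * ((\<sigma> / b) * (b * \<sigma>)) + (\<sigma> / b)\<^sup>2 * b\<^sup>2"
        using facts(4)[OF h] bsq by (simp only: mult.assoc)
      then show ?thesis unfolding c1 c2 by simp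
    qed
    finally have "ip ?d ?d = 0" .
    then have ae0: "AE u in U01. ?d u = 0"
      by (rule ip_self_zero_AE[rotated]) (rule L2_diff[OF Lhm L2_scale[OF Lka]])
    have ae: "AE u in U01. h u = hs u"
      using ae0
    proof eventually_elim
      case (elim u)
      then have "h u = \<mu> + (\<sigma> / b) * (k u - a)" by simp
      then show ?case by (simp add: hs_def a_def b_def)
    qed
    show ?thesis using LC_AE_Kc[OF facts(1)[OF h] Khs ae] by blast
  qed
qed

lemma NCP:
  assumes Lg: "L2 \<gamma>" and KQ: "Kc Q" and l: "l0 < lam"
    and m1: "ismin (\<lambda>u. \<gamma> u + lam * Q u) k" and kc: "\<forall>u\<in>{0<..<1}. k u = c"
    and m0: "ismin (\<lambda>u. \<gamma> u + l0 * Q u) k0"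
  shows "\<exists>c0. \<forall>u\<in>{0<..<1}. k0 u = c0"
proof -
  have LQ: "L2 Q" using KQ by (simp add: Kc_def)
  let ?W1 = "\<lambda>u. \<gamma> u + lam * Q u" and ?W0 = "\<lambda>u. \<gamma> u + l0 * Q u"
  have LW1: "L2 ?W1" and LW0: "L2 ?W0" using Lg LQ by (auto intro: L2_add L2_scale)
  have Kk: "Kc k" using m1 by (rule ismin_Kc)
  have Kk0: "Kc k0" using m0 by (rule ismin_Kc)
  have Lk: "L2 k" and Lk0: "L2 k0" using Kk Kk0 by (auto simp: Kc_def)
  define EQ where "EQ = integral\<^sup>L U01 Q"
  define Eg where "Eg = integral\<^sup>L U01 \<gamma>"
  define c0 where "c0 = integral\<^sup>L U01 ?W0"
  have iW: "integral\<^sup>L U01 (\<lambda>u. \<gamma> u + t * Q u) = Eg + t * EQ" for t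
    unfolding Eg_def EQ_def using Lg LQ by (subst Bochner_Integration.integral_add) (auto intro: L2_int L2_scale)
  have ik: "integral\<^sup>L U01 k = c"
  proof -
    have "integral\<^sup>L U01 k = integral\<^sup>L U01 (\<lambda>u. c)" using kc by (intro Bochner_Integration.integral_cong) auto
    then show ?thesis by simp
  qed
  have VIc: "integral\<^sup>L U01 (\<lambda>u. ?W1 u - k u) = 0" by (rule VI(3)[OF LW1 m1])
  then have cval: "c = Eg + lam * EQ" using int_diff[OF LW1 Lk] iW[of lam] ik by simp
  have c0val: "c0 = Eg + l0 * EQ" unfolding c0_def by (rule iW)
  let ?a0 = "\<lambda>u. ?W0 u - c0"
  have La0: "L2 ?a0" using LW0 by (intro L2_diff) auto
  let ?wk = "\<lambda>u. ?W1 u - k u" and ?qe = "\<lambda>u. Q u - EQ"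
  have Lwk: "L2 ?wk" using LW1 Lk by (rule L2_diff)
  have Lqe: "L2 ?qe" using LQ by (intro L2_diff) auto
  have claimA: "ip ?a0 f \<le> 0" if Kf: "Kc f" for f
  proof -
    have Lf: "L2 f" using Kf by (simp add: Kc_def)
    have "ip ?a0 f = ip (\<lambda>u. ?wk u - (lam - l0) * ?qe u) f"
      by (rule ip_cong) (use kc cval c0val in \<open>auto simp: algebra_simps\<close>)
    also have "\<dots> = ip ?wk f - (lam - l0) * ip ?qe f"
      by (subst ip_diff_left[OF Lwk L2_scale[OF Lqe] Lf]) (simp add: ip_scale_left)
    also have "\<dots> \<le> 0"
    proof -
      have "ip ?wk f \<le> 0" by (rule VI(1)[OF LW1 m1 Kf])
      moreover have "0 \<le> ip ?qe f" using Cheb[OF KQ Kf] by (simp add: EQ_def)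
      ultimately show ?thesis using l by (smt (verit) mult_nonneg_nonneg)
    qed
    finally show ?thesis .
  qed
  let ?e = "\<lambda>u. k0 u - c0"
  have Le: "L2 ?e" using Lk0 by (intro L2_diff) auto
  have ia0: "integral\<^sup>L U01 ?a0 = 0" using int_diff[OF LW0 L2_const, of c0] by (simp add: c0_def)
  have "L2dist2 ?W0 k0 = ip (\<lambda>u. ?a0 u - 1 * ?e u) (\<lambda>u. ?a0 u - 1 * ?e u)"
    unfolding L2dist2_ip by (rule ip_cong) auto
  also have "\<dots> = ip ?a0 ?a0 - 2 * ip ?a0 ?e + ip ?e ?e"
    using ip_expand[OF La0 Le, of 1] by simp
  finally have eq1: "L2dist2 ?W0 k0 = ip ?a0 ?a0 - 2 * ip ?a0 ?e + ip ?e ?e" .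
  have "ip ?a0 ?e = ip ?a0 k0 - c0 * 0"
    using ip_diff_right[OF Lk0 L2_const La0, of c0] by (simp add: ip_const_right ia0)
  then have "ip ?a0 ?e \<le> 0" using claimA[OF Kk0] by simp
  moreover have "L2dist2 ?W0 k0 \<le> ip ?a0 ?a0"
  proof -
    have "ext0 (\<lambda>u. c0) \<in> Kcone" by (rule Kc_ext0) simp
    then have "L2dist2 ?W0 k0 \<le> L2dist2 ?W0 (ext0 (\<lambda>u. c0))" using m0 by (simp add: ismin_def)
    also have "\<dots> = ip ?a0 ?a0" unfolding L2dist2_ip by (rule ip_cong) (auto simp: ext0_def)
    finally show ?thesis .
  qed
  ultimately have "ip ?e ?e \<le> 0" using eq1 by linarith
  then have "ip ?e ?e = 0" using ip_self_nonneg[of ?e] by simp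
  then have "AE u in U01. ?e u = 0" by (rule ip_self_zero_AE[OF Le])
  then have ae: "AE u in U01. k0 u = c0" by simp
  have "\<forall>u\<in>{0<..<1}. k0 u = c0" using LC_AE_Kc[OF Kk0 Kc_const ae] by blast
  then show ?thesis by blast
qed

lemma lip_cont: fixes f :: "real \<Rightarrow> real"
  assumes "\<And>x y. \<bar>f x - f y\<bar> \<le> C * \<bar>x - y\<bar>" shows "continuous_on S f"
proof (rule lipschitz_on_continuous_on)
  show "lipschitz_on \<bar>C\<bar> S f" unfolding lipschitz_on_def dist_real_def
  proof (intro conjI ballI)
    fix x y
    have "C * \<bar>x - y\<bar> \<le> \<bar>C\<bar> * \<bar>x - y\<bar>" by (intro mult_right_mono) auto
    then show "\<bar>f x - f y\<bar> \<le> \<bar>C\<bar> * \<bar>x - y\<bar>" using assms[of x y] by linarith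
  qed simp
qed

lemma CONT:
  fixes K :: "real \<Rightarrow> real \<Rightarrow> real" and \<mu> \<sigma> :: real
  assumes Lg: "L2 \<gamma>" and KQ: "Kc Q" and sig: "0 < \<sigma>"
    and m: "\<And>l. ismin (\<lambda>u. \<gamma> u + l * Q u) (K l)"
    and pos: "\<And>l. 0 < l \<Longrightarrow> 0 < stdU (K l)"
  shows "continuous_on {0<..} (\<lambda>l. corrU Q (\<lambda>u. \<mu> + \<sigma> * (K l u - EU (K l)) / stdU (K l)))"
proof -
  have LQ: "L2 Q" using KQ by (simp add: Kc_def)
  have LW: "L2 (\<lambda>u. \<gamma> u + l * Q u)" for l using Lg LQ by (auto intro: L2_add L2_scale)
  have LK: "L2 (K l)" for l using m[of l] by (auto dest!: ismin_Kc simp: Kc_def)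
  define nQ where "nQ = sqrt (ip Q Q)"
  have nQ0: "0 \<le> nQ" by (simp add: nQ_def ip_self_nonneg)
  define dK where "dK l m' = (\<lambda>u. K l u - K m' u)" for l m'
  have LdK: "L2 (dK l m')" for l m' unfolding dK_def by (rule L2_diff[OF LK LK])
  have ipdK: "sqrt (ip (dK l m') (dK l m')) \<le> nQ * \<bar>l - m'\<bar>" for l m'
  proof -
    have "ip (dK l m') (dK l m') \<le> ip (\<lambda>u. (\<gamma> u + l * Q u) - (\<gamma> u + m' * Q u)) (\<lambda>u. (\<gamma> u + l * Q u) - (\<gamma> u + m' * Q u))"
      unfolding dK_def by (rule nonexp[OF LW LW m m])
    also have "\<dots> = ip (\<lambda>u. (l - m') * Q u) (\<lambda>u. (l - m') * Q u)" by (rule ip_cong) (auto simp: algebra_simps)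
    also have "\<dots> = (l - m')\<^sup>2 * ip Q Q" by (simp add: ip_scale_left ip_scale_right power2_eq_square)
    finally have "sqrt (ip (dK l m') (dK l m')) \<le> sqrt ((l - m')\<^sup>2 * ip Q Q)" by (rule real_sqrt_le_mono)
    then show ?thesis by (simp add: real_sqrt_mult nQ_def mult.commute)
  qed
  have ip11: "ip (\<lambda>u. 1) (\<lambda>u. 1) = 1" by (simp add: ip_const_left)
  define f1 where "f1 l = ip Q (K l)" for l
  define f2 where "f2 l = EU (K l)" for l
  define f3 where "f3 l = stdU (K l)" for l
  have f1L: "\<bar>f1 l - f1 m'\<bar> \<le> (nQ * nQ) * \<bar>l - m'\<bar>" for l m'
  proof -
    have "f1 l - f1 m' = ip Q (dK l m')" unfolding f1_def dK_def by (rule ip_diff_right[OF LK LK LQ, symmetric])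
    then have "\<bar>f1 l - f1 m'\<bar> \<le> nQ * sqrt (ip (dK l m') (dK l m'))" using ip_CS_abs[OF LQ LdK] by (simp add: nQ_def)
    also have "\<dots> \<le> nQ * (nQ * \<bar>l - m'\<bar>)" by (intro mult_left_mono ipdK nQ0)
    finally show ?thesis by (simp add: mult.assoc)
  qed
  have f2eq: "f2 l - f2 m' = integral\<^sup>L U01 (dK l m')" for l m'
    unfolding f2_def EU_eq dK_def by (rule int_diff[OF LK LK, symmetric])
  have f2L: "\<bar>f2 l - f2 m'\<bar> \<le> nQ * \<bar>l - m'\<bar>" for l m'
  proof -
    have "f2 l - f2 m' = ip (\<lambda>u. 1) (dK l m')" using f2eq by (simp add: ip_const_left)
    then have "\<bar>f2 l - f2 m'\<bar> \<le> sqrt (ip (\<lambda>u. 1) (\<lambda>u. 1)) * sqrt (ip (dK l m') (dK l m'))"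
      using ip_CS_abs[OF L2_const LdK] by simp
    then show ?thesis using ipdK[of l m'] ip11 by simp
  qed
  have f3one: "f3 l \<le> f3 m' + nQ * \<bar>l - m'\<bar>" for l m'
  proof -
    let ?x = "\<lambda>u. K l u - EU (K l)" and ?y = "\<lambda>u. K m' u - EU (K m')"
    have Lx: "L2 ?x" and Ly: "L2 ?y" using LK by (auto intro: L2_diff)
    define c where "c = integral\<^sup>L U01 (dK l m')"
    have "ip (\<lambda>u. ?x u - ?y u) (\<lambda>u. ?x u - ?y u) = ip (\<lambda>u. dK l m' u - c * 1) (\<lambda>u. dK l m' u - c * 1)"
    proof (rule ip_cong)
      have cE: "c = EU (K l) - EU (K m')" using f2eq[of l m'] by (simp add: c_def f2_def)
      show "\<And>u. u \<in> {0<..<1} \<Longrightarrow> ?x u - ?y u = dK l m' u - c * 1"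
        by (simp add: dK_def cE)
      then show "\<And>u. u \<in> {0<..<1} \<Longrightarrow> ?x u - ?y u = dK l m' u - c * 1" .
    qed
    also have "\<dots> = ip (dK l m') (dK l m') - 2 * c * ip (dK l m') (\<lambda>u. 1) + c\<^sup>2 * ip (\<lambda>u. 1) (\<lambda>u. 1)"
      by (rule ip_expand[OF LdK L2_const])
    also have "\<dots> = ip (dK l m') (dK l m') - c\<^sup>2" by (simp add: ip_const_right ip11 c_def power2_eq_square)
    also have "\<dots> \<le> ip (dK l m') (dK l m')" by simp
    finally have "sqrt (ip (\<lambda>u. ?x u - ?y u) (\<lambda>u. ?x u - ?y u)) \<le> sqrt (ip (dK l m') (dK l m'))"
      by (rule real_sqrt_le_mono)
    then have "sqrt (ip ?x ?x) \<le> sqrt (ip ?y ?y) + sqrt (ip (dK l m') (dK l m'))"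
      using nrm_le[OF Lx Ly] by linarith
    then show ?thesis using ipdK[of l m'] unfolding f3_def stdU_eq by linarith
  qed
  have f3L: "\<bar>f3 l - f3 m'\<bar> \<le> nQ * \<bar>l - m'\<bar>" for l m'
    using f3one[of l m'] f3one[of m' l] by (simp add: abs_minus_commute abs_le_iff)
  have c1: "continuous_on {0<..} f1" by (rule lip_cont[OF f1L])
  have c2: "continuous_on {0<..} f2" by (rule lip_cont[OF f2L])
  have c3: "continuous_on {0<..} f3" by (rule lip_cont[OF f3L])
  define EQ where "EQ = EU Q"
  define sQ where "sQ = stdU Q"
  define Phi where "Phi l = (f1 l - f2 l * EQ) / (f3 l * sQ)" for l
  have corr_eq: "corrU Q (\<lambda>u. \<mu> + \<sigma> * (K l u - EU (K l)) / stdU (K l)) = Phi l" if l: "0 < l" for l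
  proof -
    let ?hs = "\<lambda>u. \<mu> + \<sigma> * (K l u - EU (K l)) / stdU (K l)"
    have b: "0 < f3 l" using pos[OF l] by (simp add: f3_def)
    have Mhs: "?hs \<in> Mq \<mu> \<sigma>" by (rule OPT(1)[OF LW m pos[OF l] sig])
    have Ehs: "EU ?hs = \<mu>" using Mq_facts(2)[OF Mhs] by (simp add: EU_eq)
    have "stdU ?hs = sqrt (integral\<^sup>L U01 (\<lambda>u. (?hs u - EU ?hs)\<^sup>2))"
      unfolding stdU_def[of ?hs] LINT_U01 ..
    also have "\<dots> = sqrt (\<sigma>\<^sup>2)" unfolding Ehs using Mq_facts(3)[OF Mhs] by (rule arg_cong)
    finally have Shs: "stdU ?hs = \<sigma>" using sig by simp
    have hs_eq: "?hs = (\<lambda>u. (\<sigma> / f3 l) * K l u + (\<mu> - \<sigma> * f2 l / f3 l))"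
      using b by (auto simp: f2_def f3_def field_simps)
    have "EU (\<lambda>u. Q u * ?hs u) = ip Q ?hs" by (simp add: EU_eq ip_def)
    also have "\<dots> = (\<sigma> / f3 l) * f1 l + (\<mu> - \<sigma> * f2 l / f3 l) * EQ"
      unfolding hs_eq by (subst ip_lin_right[OF LK LQ]) (simp add: f1_def EQ_def EU_eq)
    finally have num: "EU (\<lambda>u. Q u * ?hs u) = (\<sigma> / f3 l) * f1 l + (\<mu> - \<sigma> * f2 l / f3 l) * EQ" .
    show ?thesis
    proof (cases "sQ = 0")
      case True then show ?thesis by (simp add: corrU_def Phi_def sQ_def)
    next
      case False
      show ?thesis unfolding corrU_def Phi_def num Ehs Shs EQ_def[symmetric] sQ_def[symmetric]
        using b sig False by (simp add: field_simps)
    qed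
  qed
  have "continuous_on {0<..} Phi"
  proof (cases "sQ = 0")
    case True
    then have "Phi = (\<lambda>l. 0)" by (auto simp: Phi_def)
    then show ?thesis by simp
  next
    case False
    have nz: "\<forall>x\<in>{0<..}. f3 x * sQ \<noteq> 0"
    proof
      fix x :: real assume "x \<in> {0<..}"
      then have "0 < f3 x" using pos[of x] by (simp add: f3_def)
      then show "f3 x * sQ \<noteq> 0" using False by simp
    qed
    show ?thesis unfolding Phi_def[abs_def]
      by (rule continuous_on_divide[OF continuous_on_diff[OF c1 continuous_on_mult[OF c2 continuous_on_const]]
          continuous_on_mult[OF c3 continuous_on_const] nz])
  qed
  moreover have "continuous_on {0<..} (\<lambda>l. corrU Q (\<lambda>u. \<mu> + \<sigma> * (K l u - EU (K l)) / stdU (K l)))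
      = continuous_on {0<..} Phi"
    by (rule continuous_on_cong[OF refl]) (simp add: corr_eq)
  ultimately show ?thesis by simp
qed

theorem lemmaB4:
  fixes g :: "real \<Rightarrow> real" and M :: "real measure" and \<mu> \<sigma> lam :: real
  assumes "distortion g" and "abs_cont_01 g"
    and "set_integrable lborel {0<..<1} (\<lambda>u. (weight g u)\<^sup>2)"
    and "real_distribution M" and "integrable M (\<lambda>x. x\<^sup>2)"
    and "\<sigma> > 0"
    and "{l. l \<ge> 0 \<and> \<not> (\<exists>c. \<forall>u\<in>{0<..<1}. kup (weight g) (quantile (cdf M)) l u = c)} \<noteq> {}"
    and "Inf {l. l \<ge> 0 \<and> \<not> (\<exists>c. \<forall>u\<in>{0<..<1}. kup (weight g) (quantile (cdf M)) l u = c)} = 0"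
    and "lam > 0"
  shows "let \<gamma> = weight g; Q = quantile (cdf M);
             hup = (\<lambda>l u. \<mu> + \<sigma> * (kup \<gamma> Q l u - EU (kup \<gamma> Q l)) / stdU (kup \<gamma> Q l));
             w = (\<lambda>u. \<gamma> u + lam * Q u)
         in stdU (kup \<gamma> Q lam) > 0
          \<and> hup lam \<in> Mq \<mu> \<sigma>
          \<and> (\<forall>h\<in>Mq \<mu> \<sigma>. obj w h \<le> obj w (hup lam))
          \<and> (\<forall>h\<in>Mq \<mu> \<sigma>. obj w h = obj w (hup lam) \<longrightarrow> (\<forall>u\<in>{0<..<1}. h u = hup lam u))
          \<and> continuous_on {0<..} (\<lambda>l. corrU Q (hup l))"
proof -
  define \<gamma> where "\<gamma> = weight g"
  define Q where "Q = quantile (cdf M)"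
  define K where "K l = kup \<gamma> Q l" for l
  have Lg: "L2 \<gamma>" unfolding \<gamma>_def by (rule weight_L2[OF assms(2,3)])
  have KQ: "Kc Q" unfolding Q_def by (rule q_Kc[OF assms(4,5)])
  have LQ: "L2 Q" using KQ by (simp add: Kc_def)
  have LW: "L2 (\<lambda>u. \<gamma> u + l * Q u)" for l using Lg LQ by (auto intro: L2_add L2_scale)
  have m: "ismin (\<lambda>u. \<gamma> u + l * Q u) (K l)" for l
    unfolding K_def by (rule kup_ismin[OF exists_min[OF LW]])
  have Kk: "Kc (K l)" for l using m by (rule ismin_Kc)
  define S where "S = {l. l \<ge> 0 \<and> \<not> (\<exists>c. \<forall>u\<in>{0<..<1}. K l u = c)}"
  have Sne: "S \<noteq> {}" and S0: "Inf S = 0" using assms(7,8) by (simp_all add: S_def K_def \<gamma>_def Q_def)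
  have nc: "\<not> (\<exists>c. \<forall>u\<in>{0<..<1}. K l u = c)" if l: "0 < l" for l
  proof
    assume "\<exists>c. \<forall>u\<in>{0<..<1}. K l u = c"
    then obtain c where c: "\<forall>u\<in>{0<..<1}. K l u = c" by blast
    obtain l0 where l0: "l0 \<in> S" "l0 < l" using cInf_lessD[OF Sne, of l] S0 l by auto
    have "\<exists>c0. \<forall>u\<in>{0<..<1}. K l0 u = c0" by (rule NCP[OF Lg KQ l0(2) m c m])
    then show False using l0(1) unfolding S_def by blast
  qed
  have pos: "0 < stdU (K l)" if "0 < l" for l by (rule std_pos[OF Kk nc[OF that]])
  have posl: "0 < stdU (K lam)" using pos assms(9) by simp
  note O = OPT[OF LW m posl assms(6), where \<mu>=\<mu>]
  have C: "continuous_on {0<..} (\<lambda>l. corrU Q (\<lambda>u. \<mu> + \<sigma> * (K l u - EU (K l)) / stdU (K l)))"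
    by (rule CONT[OF Lg KQ assms(6) m pos])
  show ?thesis
    unfolding Let_def \<gamma>_def[symmetric] Q_def[symmetric] K_def[symmetric]
    using posl O C by blast
qed

end
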